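(* Let $f\in L^\infty(\mathbb T^d)$ be a probability density, let $X_1,\dots,X_{2n}$ be i.i.d. with density $f$, split as $\mathcal S^1=(X_1,\dots,X_n)$ and $\mathcal S^2=(X_{n+1},\dots,X_{2n})$, and let $\tilde f_n$ be an estimator of $f$ based on $\mathcal S^1$. For $j\ge0$ and $\delta\in\mathbb R$ let $$U_{n,j}(\tilde f_n)=\frac{2}{n(n-1)}\sum_{i<i',\ i,i'\in\mathcal S^2}\sum_{l<j}2^{-2l}(l\vee1)^{2\delta}\sum_{k=0}^{2^{ld}-1}\big(\psi_{lk}(X_i)-\langle\psi_{lk},\tilde f_n\rangle\big)\big(\psi_{lk}(X_{i'})-\langle\psi_{lk},\tilde f_n\rangle\big).$$ Then $$\mathrm{Var}^{(2)}(U_{n,j}(\tilde f_n))\le\frac{4\|f\|_\infty}{n}\Big(\max_{l\ge-1}4^{-l}(1\vee l)^{2\delta}\Big)\|K_j(f-\tilde f_n)\|_{H^{-1,\delta}}^2+\frac{2\|f\|_\infty^2}{n(n-1)}\sum_{l\le j-1}2^{l(d-4)}(l\vee1)^{4\delta}.$$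
   Context: $\mathbb T^d$ is the $d$-dimensional torus; $\{\phi\equiv1,\psi_{lk}:l\ge0,0\le k<2^{ld}\}$ is an $S$-regular periodised tensor-product Daubechies wavelet orthonormal basis of $L_2(\mathbb T^d)$; $\langle f,g\rangle=\int fg$, $\langle f,\psi_{l\cdot}\rangle=(\langle f,\psi_{lk}\rangle)_k$. $\mathrm{Var}^{(2)}$ denotes the variance with respect to the subsample $\mathcal S^2$ only (conditionally on $\mathcal S^1$). $K_j(g)=\langle g,1\rangle+\sum_{l<j}\sum_{k}\langle g,\psi_{lk}\rangle\psi_{lk}$. $\|g\|_{H^{-1,\delta}}=|\langle g,1\rangle|+\big(\sum_{l\ge0}2^{-2l}\max(l,1)^{2\delta}\|\langle g,\psi_{l\cdot}\rangle\|_{\ell_2}^2\big)^{1/2}$. Sums over $l$ range over integers $l\ge0$ unless indicated. *)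

theory Defs
  imports "HOL-Probability.Probability"
begin

text \<open>The torus T^d, represented by its fundamental domain [0,1)^d with Lebesgue measure.\<close>
definition torus_set :: "(real ^ 'd) set" where
  "torus_set = {x. \<forall>i. 0 \<le> x $ i \<and> x $ i < 1}"

definition torus :: "(real ^ 'd) measure" where
  "torus = restrict_space lborel torus_set"

definition inner_T :: "(real ^ 'd \<Rightarrow> real) \<Rightarrow> (real ^ 'd \<Rightarrow> real) \<Rightarrow> real" where
  "inner_T g h = (LINT x|torus. g x * h x)"

definition nwav :: "'d itself \<Rightarrow> nat \<Rightarrow> nat" where
  "nwav _ l = 2 ^ (l * CARD('d))"

definition L2_T :: "(real ^ 'd \<Rightarrow> real) set" where
  "L2_T = {g. g \<in> borel_measurable torus \<and> integrable torus (\<lambda>x. (g x)\<^sup>2)}"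

text \<open>{1} \<union> {psi l k : l \<ge> 0, k < 2^(ld)} is an orthonormal basis of L2(T^d)
  consisting of bounded measurable functions (completeness stated via Parseval).\<close>
definition wavelet_ONB :: "(nat \<Rightarrow> nat \<Rightarrow> real ^ 'd \<Rightarrow> real) \<Rightarrow> bool" where
  "wavelet_ONB psi \<longleftrightarrow>
     (\<forall>l k. k < nwav TYPE('d) l \<longrightarrow>
        psi l k \<in> borel_measurable torus \<and>
        (\<exists>B. \<forall>x\<in>torus_set. \<bar>psi l k x\<bar> \<le> B) \<and>
        inner_T (psi l k) (\<lambda>_. 1) = 0) \<and>
     (\<forall>l k l' k'. k < nwav TYPE('d) l \<longrightarrow> k' < nwav TYPE('d) l' \<longrightarrow>
        inner_T (psi l k) (psi l' k') = (if l = l' \<and> k = k' then 1 else 0)) \<and>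
     (\<forall>g\<in>L2_T. (\<lambda>l. \<Sum>k<nwav TYPE('d) l. (inner_T g (psi l k))\<^sup>2) sums
        (inner_T g g - (inner_T g (\<lambda>_. 1))\<^sup>2))"

definition Kproj :: "(nat \<Rightarrow> nat \<Rightarrow> real ^ 'd \<Rightarrow> real) \<Rightarrow> nat \<Rightarrow> (real ^ 'd \<Rightarrow> real) \<Rightarrow> real ^ 'd \<Rightarrow> real" where
  "Kproj psi j g = (\<lambda>x. inner_T g (\<lambda>_. 1) +
      (\<Sum>l<j. \<Sum>k<nwav TYPE('d) l. inner_T g (psi l k) * psi l k x))"

text \<open>The H^{-1,delta} norm; the l2 norm of the level-l coefficients is squared.\<close>
definition Hnorm :: "(nat \<Rightarrow> nat \<Rightarrow> real ^ 'd \<Rightarrow> real) \<Rightarrow> real \<Rightarrow> (real ^ 'd \<Rightarrow> real) \<Rightarrow> real" where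
  "Hnorm psi \<delta> g = \<bar>inner_T g (\<lambda>_. 1)\<bar> +
     sqrt (\<Sum>l. 2 powr (- 2 * real l) * real (max l 1) powr (2 * \<delta>) *
                 (\<Sum>k<nwav TYPE('d) l. (inner_T g (psi l k))\<^sup>2))"

text \<open>The U-statistic U_{n,j}(g) computed from the second subsample xs 0, ..., xs (n-1).\<close>
definition Ustat :: "(nat \<Rightarrow> nat \<Rightarrow> real ^ 'd \<Rightarrow> real) \<Rightarrow> real \<Rightarrow> nat \<Rightarrow> nat \<Rightarrow>
    (real ^ 'd \<Rightarrow> real) \<Rightarrow> (nat \<Rightarrow> real ^ 'd) \<Rightarrow> real" where
  "Ustat psi \<delta> n j g xs = 2 / (real n * (real n - 1)) *
     (\<Sum>i'<n. \<Sum>i<i'. \<Sum>l<j. 2 powr (- 2 * real l) * real (max l 1) powr (2 * \<delta>) *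
        (\<Sum>k<nwav TYPE('d) l. (psi l k (xs i) - inner_T (psi l k) g) *
                                 (psi l k (xs i') - inner_T (psi l k) g)))"

definition Linf_norm :: "(real ^ 'd \<Rightarrow> real) \<Rightarrow> real" where
  "Linf_norm f = real_of_ereal (esssup torus (\<lambda>x. ereal \<bar>f x\<bar>))"

definition sample_law :: "(real ^ 'd \<Rightarrow> real) \<Rightarrow> nat \<Rightarrow> (nat \<Rightarrow> real ^ 'd) measure" where
  "sample_law f n = PiM {..<n} (\<lambda>_. density torus (\<lambda>x. ennreal (f x)))"

end

theory Submission imports Defs "HOL-Real_Asymp.Real_Asymp" begin
lemma torus_set_sets[measurable]: "torus_set \<in> sets (lborel :: (real^'d) measure)"
proof -
  have "torus_set = (\<Inter>i. {x::real^'d. 0 \<le> x$i} \<inter> {x. x$i < 1})"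
    unfolding torus_set_def by auto
  also have "\<dots> \<in> sets lborel"
    by (intro sets.countable_INT' countable_finite) auto
  finally show ?thesis .
qed

lemma torus_set_borel: "torus_set \<in> sets (borel :: (real^'d) measure)"
  using torus_set_sets by simp

lemma space_torus: "space (torus :: (real^'d) measure) = torus_set"
  by (simp add: torus_def space_restrict_space)

lemma sets_torus_iff: "A \<in> sets (torus :: (real^'d) measure) \<longleftrightarrow> A \<subseteq> torus_set \<and> A \<in> sets lborel"
  unfolding torus_def
  by (rule sets_restrict_space_iff) (simp add: torus_set_borel)

lemma bounded_torus_set: "bounded (torus_set :: (real^'d) set)"
proof -
  have "norm x \<le> real CARD('d)" if "x \<in> torus_set" for x :: "real^'d"
  proof -
    have "norm x \<le> (\<Sum>i\<in>UNIV. \<bar>x$i\<bar>)" by (rule norm_le_l1_cart)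
    also have "\<dots> \<le> (\<Sum>i\<in>(UNIV::'d set). 1)"
    proof (intro sum_mono)
      fix i have "0 \<le> x$i" "x$i < 1" using that unfolding torus_set_def by auto
      then show "\<bar>x$i\<bar> \<le> 1" by simp
    qed
    also have "\<dots> = real CARD('d)" by simp
    finally show ?thesis .
  qed
  then show ?thesis unfolding bounded_iff by blast
qed

lemma finite_measure_torus: "finite_measure (torus :: (real^'d) measure)"
proof
  have "emeasure (torus :: (real^'d) measure) (space torus) = emeasure lborel (torus_set :: (real^'d) set)"
    unfolding space_torus unfolding torus_def
    by (rule emeasure_restrict_space) (simp_all add: torus_set_borel)
  also have "\<dots> < \<infinity>" by (rule emeasure_bounded_finite[OF bounded_torus_set])
  finally show "emeasure (torus :: (real^'d) measure) (space torus) \<noteq> \<infinity>" by simp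
qed

definition bddT :: "(real^'d \<Rightarrow> real) \<Rightarrow> bool" where
  "bddT h \<longleftrightarrow> h \<in> borel_measurable torus \<and> (\<exists>B. AE x in torus. \<bar>h x\<bar> \<le> B)"

lemma bddT_const[simp, intro]: "bddT (\<lambda>x. c)"
  unfolding bddT_def
proof (intro conjI exI)
  show "AE x in torus. \<bar>c\<bar> \<le> \<bar>c\<bar>" by simp
qed simp

lemma bddT_add[intro]: "bddT h1 \<Longrightarrow> bddT h2 \<Longrightarrow> bddT (\<lambda>x. h1 x + h2 x)"
  unfolding bddT_def
proof (elim conjE exE, intro conjI)
  fix B1 B2 assume "AE x in torus. \<bar>h1 x\<bar> \<le> B1" "AE x in torus. \<bar>h2 x\<bar> \<le> B2"
  then have "AE x in torus. \<bar>h1 x + h2 x\<bar> \<le> B1 + B2" by eventually_elim linarith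
  then show "\<exists>B. AE x in torus. \<bar>h1 x + h2 x\<bar> \<le> B" by blast
next
  assume "h1 \<in> borel_measurable torus" "h2 \<in> borel_measurable torus"
  then show "(\<lambda>x. h1 x + h2 x) \<in> borel_measurable torus" by (rule borel_measurable_add)
qed

lemma bddT_diff[intro]: "bddT h1 \<Longrightarrow> bddT h2 \<Longrightarrow> bddT (\<lambda>x. h1 x - h2 x)"
  unfolding bddT_def
proof (elim conjE exE, intro conjI)
  fix B1 B2 assume "AE x in torus. \<bar>h1 x\<bar> \<le> B1" "AE x in torus. \<bar>h2 x\<bar> \<le> B2"
  then have "AE x in torus. \<bar>h1 x - h2 x\<bar> \<le> B1 + B2" by eventually_elim linarith
  then show "\<exists>B. AE x in torus. \<bar>h1 x - h2 x\<bar> \<le> B" by blast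
next
  assume "h1 \<in> borel_measurable torus" "h2 \<in> borel_measurable torus"
  then show "(\<lambda>x. h1 x - h2 x) \<in> borel_measurable torus" by (rule borel_measurable_diff)
qed

lemma bddT_mult[intro]: "bddT h1 \<Longrightarrow> bddT h2 \<Longrightarrow> bddT (\<lambda>x. h1 x * h2 x)"
  unfolding bddT_def
proof (elim conjE exE, intro conjI)
  fix B1 B2 assume "AE x in torus. \<bar>h1 x\<bar> \<le> B1" "AE x in torus. \<bar>h2 x\<bar> \<le> B2"
  then have "AE x in torus. \<bar>h1 x * h2 x\<bar> \<le> B1 * B2" 
  proof eventually_elim
    case (elim x)
    have "\<bar>h1 x * h2 x\<bar> = \<bar>h1 x\<bar> * \<bar>h2 x\<bar>" by (rule abs_mult)
    also have "\<dots> \<le> B1 * B2" using elim by (intro mult_mono) auto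
    finally show ?case .
  qed
  then show "\<exists>B. AE x in torus. \<bar>h1 x * h2 x\<bar> \<le> B" by blast
next
  assume "h1 \<in> borel_measurable torus" "h2 \<in> borel_measurable torus"
  then show "(\<lambda>x. h1 x * h2 x) \<in> borel_measurable torus" by (rule borel_measurable_times)
qed

lemma bddT_sum[intro]: "(\<And>p. p \<in> A \<Longrightarrow> bddT (h p)) \<Longrightarrow> bddT (\<lambda>x. \<Sum>p\<in>A. h p x)"
proof (induction A rule: infinite_finite_induct)
  case (infinite A)
  then have "(\<lambda>x. \<Sum>p\<in>A. h p x) = (\<lambda>x. 0)" by simp
  then show ?case by (simp only: bddT_const)
next
  case empty
  then show ?case by (simp only: sum.empty bddT_const)
next
  case (insert a A)
  have "bddT (\<lambda>x. h a x + (\<Sum>p\<in>A. h p x))"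
  proof (rule bddT_add)
    show "bddT (h a)" by (rule insert.prems) simp
    show "bddT (\<lambda>x. \<Sum>p\<in>A. h p x)" by (rule insert.IH) (rule insert.prems, simp)
  qed
  moreover have "(\<lambda>x. \<Sum>p\<in>insert a A. h p x) = (\<lambda>x. h a x + (\<Sum>p\<in>A. h p x))"
    using insert.hyps by (simp add: sum.insert)
  ultimately show ?case by simp
qed

lemma bddT_integrable: "bddT h \<Longrightarrow> integrable torus h"
proof -
  assume "bddT h"
  then obtain B where m: "h \<in> borel_measurable torus" and B: "AE x in torus. \<bar>h x\<bar> \<le> B"
    unfolding bddT_def by blast
  from B have B': "AE x in torus. norm (h x) \<le> B" by simp
  show ?thesis by (rule finite_measure.integrable_const_bound[OF finite_measure_torus B' m])
qed

definition ind :: "nat \<Rightarrow> nat \<Rightarrow> ('a \<Rightarrow> real) \<Rightarrow> 'a \<Rightarrow> real" where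
  "ind t i h y = (if t = i then h y else 1)"

lemma bddT_ind[intro]: "bddT h \<Longrightarrow> bddT (ind t i h)"
  unfolding ind_def by (cases "t = i") auto

lemma prod_ind: "i < n \<Longrightarrow> (\<Prod>t<n. ind t i h (xs t)) = h (xs i)"
  unfolding ind_def by simp

lemma prod_one_pt:
  fixes F :: "nat \<Rightarrow> real"
  assumes "i < n" "\<And>s. s < n \<Longrightarrow> s \<noteq> i \<Longrightarrow> F s = 1"
  shows "(\<Prod>s<n. F s) = F i"
proof -
  have "(\<Prod>s\<in>{i}. F s) = (\<Prod>s<n. F s)"
    by (rule prod.mono_neutral_left) (use assms in auto)
  then show ?thesis by simp
qed

lemma prod_two_pt:
  fixes F :: "nat \<Rightarrow> real"
  assumes "i < n" "i' < n" "i \<noteq> i'" "\<And>s. s < n \<Longrightarrow> s \<noteq> i \<Longrightarrow> s \<noteq> i' \<Longrightarrow> F s = 1"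
  shows "(\<Prod>s<n. F s) = F i * F i'"
proof -
  have "(\<Prod>s\<in>{i,i'}. F s) = (\<Prod>s<n. F s)"
    by (rule prod.mono_neutral_left) (use assms in auto)
  then show ?thesis using assms(3) by simp
qed

lemma prod_zero_pt:
  fixes F :: "nat \<Rightarrow> real"
  assumes "i < n" "F i = 0"
  shows "(\<Prod>s<n. F s) = 0"
  using assms by (simp add: prod_zero_iff) blast

lemma pair_sum:
  fixes y :: "nat \<Rightarrow> real"
  shows "(\<Sum>i'<n. \<Sum>i<i'. (y i + y i')) = (real n - 1) * (\<Sum>i<n. y i)"
proof (induction n)
  case (Suc n)
  have "(\<Sum>i'<Suc n. \<Sum>i<i'. (y i + y i')) = (\<Sum>i'<n. \<Sum>i<i'. (y i + y i')) + (\<Sum>i<n. (y i + y n))"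
    by simp
  also have "\<dots> = (real n - 1) * (\<Sum>i<n. y i) + (\<Sum>i<n. y i) + real n * y n"
    using Suc by (simp add: sum.distrib)
  also have "\<dots> = (real (Suc n) - 1) * (\<Sum>i<Suc n. y i)"
    by (simp add: algebra_simps)
  finally show ?case .
qed simp

lemma count_pairs: "(\<Sum>i<n. real i) = real n * (real n - 1) / 2"
  by (induction n) (simp_all add: algebra_simps add_divide_distrib)

lemma int_sum1:
  fixes F :: "'i \<Rightarrow> 'a \<Rightarrow> real"
  assumes "\<And>a. a \<in> A \<Longrightarrow> integrable M (F a)"
  shows "integrable M (\<lambda>x. \<Sum>a\<in>A. F a x)" "integral\<^sup>L M (\<lambda>x. \<Sum>a\<in>A. F a x) = (\<Sum>a\<in>A. integral\<^sup>L M (F a))"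
  using assms by (auto intro!: integral_sum)

lemma int_sum2:
  fixes F :: "'i \<Rightarrow> 'j \<Rightarrow> 'a \<Rightarrow> real"
  assumes "\<And>a b. a \<in> A \<Longrightarrow> b \<in> B a \<Longrightarrow> integrable M (F a b)"
  shows "integrable M (\<lambda>x. \<Sum>a\<in>A. \<Sum>b\<in>B a. F a b x)"
    "integral\<^sup>L M (\<lambda>x. \<Sum>a\<in>A. \<Sum>b\<in>B a. F a b x) = (\<Sum>a\<in>A. \<Sum>b\<in>B a. integral\<^sup>L M (F a b))"
proof -
  have i: "integrable M (\<lambda>x. \<Sum>b\<in>B a. F a b x)" if "a \<in> A" for a
    using int_sum1(1)[of "B a" M "F a"] assms that by blast
  show "integrable M (\<lambda>x. \<Sum>a\<in>A. \<Sum>b\<in>B a. F a b x)"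
    using int_sum1(1)[of A M "\<lambda>a x. \<Sum>b\<in>B a. F a b x"] i by blast
  have "integral\<^sup>L M (\<lambda>x. \<Sum>a\<in>A. \<Sum>b\<in>B a. F a b x) = (\<Sum>a\<in>A. integral\<^sup>L M (\<lambda>x. \<Sum>b\<in>B a. F a b x))"
    using int_sum1(2)[of A M "\<lambda>a x. \<Sum>b\<in>B a. F a b x"] i by blast
  also have "\<dots> = (\<Sum>a\<in>A. \<Sum>b\<in>B a. integral\<^sup>L M (F a b))"
    by (rule sum.cong[OF refl]) (use int_sum1(2)[of "B _" M "F _"] assms in blast)
  finally show "integral\<^sup>L M (\<lambda>x. \<Sum>a\<in>A. \<Sum>b\<in>B a. F a b x) = (\<Sum>a\<in>A. \<Sum>b\<in>B a. integral\<^sup>L M (F a b))" .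
qed

lemma sum_pair_delta:
  fixes X :: real and i i' n :: nat
  assumes "i < i'" "i' < n"
  shows "(\<Sum>t'<n. \<Sum>t<t'. if i = t \<and> i' = t' then X else 0) = X"
proof -
  have "(\<Sum>t<t'. if i = t \<and> i' = t' then X else 0) = (if t' = i' then X else 0)" for t'
  proof (cases "t' = i'")
    case True
    then have "(\<Sum>t<t'. if i = t \<and> i' = t' then X else 0) = (\<Sum>t<t'. if t = i then X else 0)"
      by (intro sum.cong) auto
    also have "\<dots> = X" using True assms by (subst sum.delta) auto
    finally show ?thesis using True by simp
  qed simp
  then have "(\<Sum>t'<n. \<Sum>t<t'. if i = t \<and> i' = t' then X else 0) = (\<Sum>t'<n. if t' = i' then X else 0)"
    by simp
  also have "\<dots> = X" using assms by simp
  finally show ?thesis .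
qed

lemma alg1: "(a::real) \<noteq> 0 \<Longrightarrow> (2 / a)\<^sup>2 * (a / 2) = 2 / a"
  by (simp add: power2_eq_square field_simps)

lemma alg2: "(y::real) \<noteq> 0 \<Longrightarrow> x \<noteq> 0 \<Longrightarrow> (2 / (x * y))\<^sup>2 * y\<^sup>2 * x = 4 / x"
  by (simp add: power2_eq_square field_simps)

lemma quad_gen:
  fixes \<phi> :: "'i \<Rightarrow> 'a \<Rightarrow> real"
  assumes "\<And>p q. p \<in> A \<Longrightarrow> q \<in> A \<Longrightarrow> integrable M (\<lambda>x. \<phi> p x * \<phi> q x)"
  shows "integrable M (\<lambda>x. (\<Sum>p\<in>A. z p * \<phi> p x)\<^sup>2)"
    "integral\<^sup>L M (\<lambda>x. (\<Sum>p\<in>A. z p * \<phi> p x)\<^sup>2) = (\<Sum>p\<in>A. \<Sum>q\<in>A. z p * z q * integral\<^sup>L M (\<lambda>x. \<phi> p x * \<phi> q x))"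
proof -
  have eq: "(\<lambda>x. (\<Sum>p\<in>A. z p * \<phi> p x)\<^sup>2) = (\<lambda>x. \<Sum>p\<in>A. \<Sum>q\<in>A. z p * z q * (\<phi> p x * \<phi> q x))"
  proof
    fix x
    have "(\<Sum>p\<in>A. z p * \<phi> p x)\<^sup>2 = (\<Sum>p\<in>A. \<Sum>q\<in>A. (z p * \<phi> p x) * (z q * \<phi> q x))"
      unfolding power2_eq_square by (rule sum_product)
    also have "\<dots> = (\<Sum>p\<in>A. \<Sum>q\<in>A. z p * z q * (\<phi> p x * \<phi> q x))"
      by (intro sum.cong refl) (simp add: algebra_simps)
    finally show "(\<Sum>p\<in>A. z p * \<phi> p x)\<^sup>2 = (\<Sum>p\<in>A. \<Sum>q\<in>A. z p * z q * (\<phi> p x * \<phi> q x))" .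
  qed
  have I: "integrable M (\<lambda>x. z p * z q * (\<phi> p x * \<phi> q x))" if "p \<in> A" "q \<in> A" for p q
    using assms[OF that] by simp
  show "integrable M (\<lambda>x. (\<Sum>p\<in>A. z p * \<phi> p x)\<^sup>2)" unfolding eq
    by (rule int_sum2(1)) (rule I)
  have "integral\<^sup>L M (\<lambda>x. (\<Sum>p\<in>A. z p * \<phi> p x)\<^sup>2) = (\<Sum>p\<in>A. \<Sum>q\<in>A. integral\<^sup>L M (\<lambda>x. z p * z q * (\<phi> p x * \<phi> q x)))"
    unfolding eq by (rule int_sum2(2)) (rule I)
  also have "\<dots> = (\<Sum>p\<in>A. \<Sum>q\<in>A. z p * z q * integral\<^sup>L M (\<lambda>x. \<phi> p x * \<phi> q x))"
    by simp
  finally show "integral\<^sup>L M (\<lambda>x. (\<Sum>p\<in>A. z p * \<phi> p x)\<^sup>2) = (\<Sum>p\<in>A. \<Sum>q\<in>A. z p * z q * integral\<^sup>L M (\<lambda>x. \<phi> p x * \<phi> q x))" .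
qed

lemma bddT_mult_integrable:
  assumes "bddT h" "integrable torus g"
  shows "integrable torus (\<lambda>x. h x * g x)"
proof -
  obtain B where m: "h \<in> borel_measurable torus" and B: "AE x in torus. \<bar>h x\<bar> \<le> B"
    using assms(1) unfolding bddT_def by blast
  have gm: "g \<in> borel_measurable torus" using assms(2) by (rule borel_measurable_integrable)
  have i: "integrable torus (\<lambda>x. B * g x)" using assms(2) by simp
  have mm: "(\<lambda>x. h x * g x) \<in> borel_measurable torus" using m gm by (rule borel_measurable_times)
  have ae: "AE x in torus. norm (h x * g x) \<le> norm (B * g x)"
    using B
  proof eventually_elim
    case (elim x)
    have "norm (h x * g x) = \<bar>h x\<bar> * \<bar>g x\<bar>" by (simp add: abs_mult)
    also have "\<dots> \<le> \<bar>B\<bar> * \<bar>g x\<bar>" using elim by (intro mult_right_mono) auto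
    also have "\<dots> = norm (B * g x)" by (simp add: abs_mult)
    finally show ?case .
  qed
  show ?thesis by (rule Bochner_Integration.integrable_bound[OF i mm ae])
qed

lemma four_powr: "(4::real) powr y = 2 powr (2 * y)"
proof -
  have "(2::real) powr (2 * y) = (2 powr 2) powr y" by (rule powr_powr[symmetric])
  also have "(2::real) powr 2 = 4" by (simp add: powr_numeral)
  finally show ?thesis by simp
qed
lemma S_bdd:
  fixes \<delta> :: real
  shows "bdd_above ((\<lambda>l::int. 4 powr (- real_of_int l) * real_of_int (max 1 l) powr (2 * \<delta>)) ` {l. l \<ge> -1})"
proof -
  define e where "e = max 0 (2 * \<delta>)"
  have e0: "0 \<le> e" unfolding e_def by simp
  have "(\<lambda>m::nat. 4 powr (- real m) * real m powr e) \<longlonglongrightarrow> 0"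
    using e0 by real_asymp
  then have "Bseq (\<lambda>m::nat. 4 powr (- real m) * real m powr e)" by (rule convergent_imp_Bseq[OF convergentI])
  then obtain K where K: "K > 0" "\<And>m. norm (4 powr (- real m) * real m powr e) \<le> K" unfolding Bseq_def by blast
  have "4 powr (- real_of_int l) * real_of_int (max 1 l) powr (2 * \<delta>) \<le> max 4 K" if l: "l \<ge> -1" for l :: int
  proof (cases "l \<le> 0")
    case True
    then have "l = -1 \<or> l = 0" using l by auto
    then show ?thesis by auto
  next
    case False
    then have "l \<ge> 0" by simp
    then obtain m :: nat where m0: "l = int m" using zero_le_imp_eq_int by blast
    with False have m: "l = int m" "m \<ge> 1" by auto
    have "real_of_int (max 1 l) = real m" using m by simp
    then have "4 powr (- real_of_int l) * real_of_int (max 1 l) powr (2 * \<delta>) = 4 powr (- real m) * real m powr (2 * \<delta>)"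
      using m by simp
    also have "\<dots> \<le> 4 powr (- real m) * real m powr e"
      using m by (intro mult_left_mono powr_mono) (auto simp: e_def)
    also have "\<dots> \<le> K" using K(2)[of m] by simp
    finally show ?thesis by simp
  qed
  then show ?thesis unfolding bdd_above_def by blast
qed

locale Useq =
  fixes f g :: "real^'d \<Rightarrow> real" and psi :: "nat \<Rightarrow> nat \<Rightarrow> real^'d \<Rightarrow> real"
  assumes basis: "wavelet_ONB psi"
    and f_meas[measurable]: "f \<in> borel_measurable torus"
    and f_nonneg: "AE x in torus. 0 \<le> f x"
    and f_dens: "(LINT x|torus. f x) = 1"
    and f_Linf: "esssup torus (\<lambda>x. ereal \<bar>f x\<bar>) < \<infinity>"
    and g_int: "integrable torus g"
begin

definition "mu = density torus (\<lambda>x. ennreal (f x))"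
definition "L = Linf_norm f"

lemma f_int: "integrable torus f"
proof (rule ccontr)
  assume "\<not> integrable torus f"
  then have "(LINT x|torus. f x) = 0" by (rule not_integrable_integral_eq)
  with f_dens show False by simp
qed

lemma L_bound: "AE x in torus. \<bar>f x\<bar> \<le> L" and L_nonneg: "0 \<le> L"
proof -
  let ?E = "esssup torus (\<lambda>x. ereal \<bar>f x\<bar>)"
  have ae: "AE x in torus. ereal \<bar>f x\<bar> \<le> ?E" by (rule esssup_AE)
  have E0: "0 \<le> ?E"
  proof (rule ccontr)
    assume neg: "\<not> 0 \<le> ?E"
    have "AE x in torus. f x = 0" using ae
    proof eventually_elim
      case (elim x)
      have "0 \<le> ereal \<bar>f x\<bar>" by simp
      then show ?case using elim neg by (meson order_trans)
    qed
    then have "(LINT x|torus. f x) = 0" by (rule integral_eq_zero_AE)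
    then show False using f_dens by simp
  qed
  then obtain r where r: "?E = ereal r" using f_Linf by (cases ?E) auto
  have Lr: "L = r" unfolding L_def Linf_norm_def r by simp
  show "AE x in torus. \<bar>f x\<bar> \<le> L" using ae by eventually_elim (simp add: r Lr)
  show "0 \<le> L" using E0 by (simp add: r Lr)
qed

lemma bddT_f: "bddT f"
  unfolding bddT_def using L_bound by auto

lemma psi_props:
  assumes "k < nwav TYPE('d) l"
  shows "bddT (psi l k)" "inner_T (psi l k) (\<lambda>_. 1) = 0"
proof -
  have m: "psi l k \<in> borel_measurable torus" and b: "\<exists>B. \<forall>x\<in>torus_set. \<bar>psi l k x\<bar> \<le> B"
    and i: "inner_T (psi l k) (\<lambda>_. 1) = 0"
    using basis assms unfolding wavelet_ONB_def by blast+
  from b obtain B where "\<forall>x\<in>torus_set. \<bar>psi l k x\<bar> \<le> B" by blast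
  then have "AE x in torus. \<bar>psi l k x\<bar> \<le> B" by (intro AE_I2) (simp add: space_torus)
  then show "bddT (psi l k)" using m unfolding bddT_def by blast
  show "inner_T (psi l k) (\<lambda>_. 1) = 0" by (rule i)
qed

lemma psi_orth:
  assumes "k < nwav TYPE('d) l" "k' < nwav TYPE('d) l'"
  shows "inner_T (psi l k) (psi l' k') = (if l = l' \<and> k = k' then 1 else 0)"
  using basis assms unfolding wavelet_ONB_def by blast

lemma space_mu[simp]: "space mu = torus_set"
  by (simp add: mu_def space_torus)

lemma sets_mu[simp, measurable_cong]: "sets mu = sets torus"
  by (simp add: mu_def)

lemma prob_mu: "prob_space mu"
proof
  have "emeasure mu (space mu) = (\<integral>\<^sup>+ x. ennreal (f x) * indicator (space torus) x \<partial>torus)"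
    unfolding mu_def by (subst emeasure_density) auto
  also have "\<dots> = (\<integral>\<^sup>+ x. ennreal (f x) \<partial>torus)"
    by (intro nn_integral_cong) auto
  also have "\<dots> = ennreal (LINT x|torus. f x)"
    by (rule nn_integral_eq_integral[OF f_int f_nonneg])
  finally show "emeasure mu (space mu) = 1" by (simp add: f_dens)
qed

lemma bddT_mu_integrable: "bddT h \<Longrightarrow> integrable mu h"
proof -
  assume "bddT h"
  then obtain B where m: "h \<in> borel_measurable torus" and B: "AE x in torus. \<bar>h x\<bar> \<le> B"
    unfolding bddT_def by blast
  have "AE x in mu. \<bar>h x\<bar> \<le> B" unfolding mu_def
  proof (subst AE_density)
    show "(\<lambda>x. ennreal (f x)) \<in> borel_measurable torus" by measurable
    show "AE x in torus. 0 < ennreal (f x) \<longrightarrow> \<bar>h x\<bar> \<le> B" using B by eventually_elim simp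
  qed
  then have B': "AE x in mu. norm (h x) \<le> B" by simp
  have m': "h \<in> borel_measurable mu" using m by (simp add: mu_def)
  interpret prob_space mu by (rule prob_mu)
  show ?thesis by (rule integrable_const_bound[OF B' m'])
qed

lemma bddT_mu_integral: "bddT h \<Longrightarrow> integral\<^sup>L mu h = (LINT x|torus. f x * h x)"
  unfolding mu_def bddT_def
  by (subst integral_density) (auto simp: f_nonneg)


definition "PP n = PiM {..<n} (\<lambda>_::nat. mu)"

lemma prob_PP: "prob_space (PP n)"
  unfolding PP_def by (rule prob_space_PiM) (rule prob_mu)

lemma E_gen4:
  assumes "i1 < n" "i2 < n" "i3 < n" "i4 < n" "bddT h1" "bddT h2" "bddT h3" "bddT h4"
  shows "integrable (PP n) (\<lambda>xs. h1 (xs i1) * h2 (xs i2) * h3 (xs i3) * h4 (xs i4))"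
    and "integral\<^sup>L (PP n) (\<lambda>xs. h1 (xs i1) * h2 (xs i2) * h3 (xs i3) * h4 (xs i4)) =
         (\<Prod>t<n. integral\<^sup>L mu (\<lambda>y. ind t i1 h1 y * ind t i2 h2 y * ind t i3 h3 y * ind t i4 h4 y))"
proof -
  interpret PS: product_sigma_finite "\<lambda>_::nat. mu"
    by (simp add: product_sigma_finite_def prob_space_imp_sigma_finite[OF prob_mu])
  define G where "G = (\<lambda>t y. ind t i1 h1 y * ind t i2 h2 y * ind t i3 h3 y * ind t i4 h4 y)"
  have int: "integrable mu (G t)" for t
    unfolding G_def using assms by (intro bddT_mu_integrable bddT_mult bddT_ind)
  have eq: "(\<lambda>xs. h1 (xs i1) * h2 (xs i2) * h3 (xs i3) * h4 (xs i4)) = (\<lambda>xs. \<Prod>t<n. G t (xs t))"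
  proof
    fix xs :: "nat \<Rightarrow> real^'d"
    have "(\<Prod>t<n. G t (xs t)) = (\<Prod>t<n. ind t i1 h1 (xs t)) * (\<Prod>t<n. ind t i2 h2 (xs t)) *
        (\<Prod>t<n. ind t i3 h3 (xs t)) * (\<Prod>t<n. ind t i4 h4 (xs t))"
      unfolding G_def by (simp only: prod.distrib)
    also have "\<dots> = h1 (xs i1) * h2 (xs i2) * h3 (xs i3) * h4 (xs i4)"
      using assms by (simp only: prod_ind)
    finally show "h1 (xs i1) * h2 (xs i2) * h3 (xs i3) * h4 (xs i4) = (\<Prod>t<n. G t (xs t))" by simp
  qed
  show "integrable (PP n) (\<lambda>xs. h1 (xs i1) * h2 (xs i2) * h3 (xs i3) * h4 (xs i4))"
    unfolding eq PP_def by (rule PS.product_integrable_prod) (auto intro: int)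
  show "integral\<^sup>L (PP n) (\<lambda>xs. h1 (xs i1) * h2 (xs i2) * h3 (xs i3) * h4 (xs i4)) =
         (\<Prod>t<n. integral\<^sup>L mu (\<lambda>y. ind t i1 h1 y * ind t i2 h2 y * ind t i3 h3 y * ind t i4 h4 y))"
  proof -
    have "integral\<^sup>L (PP n) (\<lambda>xs. \<Prod>t<n. G t (xs t)) = (\<Prod>t<n. integral\<^sup>L mu (G t))"
      unfolding PP_def by (rule PS.product_integral_prod) (auto intro: int)
    then show ?thesis unfolding eq by (simp add: G_def)
  qed
qed


lemma measure_mu_one[simp]: "measure mu torus_set = 1"
  using prob_space.prob_space[OF prob_mu] by simp

lemma int_one: "integral\<^sup>L mu (\<lambda>_. 1) = (1::real)"
  by simp

definition "cent h \<longleftrightarrow> bddT h \<and> integral\<^sup>L mu h = 0"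

lemma EX1:
  assumes "cent a" "cent b" "i < n" "i' < n"
  shows "integrable (PP n) (\<lambda>xs. a (xs i) * b (xs i'))"
    and "integral\<^sup>L (PP n) (\<lambda>xs. a (xs i) * b (xs i')) = (if i = i' then integral\<^sup>L mu (\<lambda>y. a y * b y) else 0)"
proof -
  have a: "bddT a" "integral\<^sup>L mu a = 0" and b: "bddT b" "integral\<^sup>L mu b = 0"
    using assms unfolding cent_def by auto
  note E = E_gen4[OF assms(3,4,3,3) a(1) b(1) bddT_const bddT_const, of 1 1]
  have eq: "(\<lambda>xs. a (xs i) * b (xs i') * 1 * 1) = (\<lambda>xs. a (xs i) * b (xs i'))" by simp
  show "integrable (PP n) (\<lambda>xs. a (xs i) * b (xs i'))" using E(1) unfolding eq .
  show "integral\<^sup>L (PP n) (\<lambda>xs. a (xs i) * b (xs i')) = (if i = i' then integral\<^sup>L mu (\<lambda>y. a y * b y) else 0)"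
  proof (cases "i = i'")
    case True
    have "(\<Prod>t<n. integral\<^sup>L mu (\<lambda>y. ind t i a y * ind t i' b y * ind t i (\<lambda>_. 1) y * ind t i (\<lambda>_. 1) y))
       = integral\<^sup>L mu (\<lambda>y. ind i i a y * ind i i' b y * ind i i (\<lambda>_. 1) y * ind i i (\<lambda>_. 1) y)"
      by (rule prod_one_pt) (use assms(3) True in \<open>auto simp: ind_def int_one\<close>)
    also have "\<dots> = integral\<^sup>L mu (\<lambda>y. a y * b y)" using True by (simp add: ind_def)
    finally show ?thesis using E(2) True unfolding eq by simp
  next
    case False
    have "(\<Prod>t<n. integral\<^sup>L mu (\<lambda>y. ind t i a y * ind t i' b y * ind t i (\<lambda>_. 1) y * ind t i (\<lambda>_. 1) y)) = 0"
      by (rule prod_zero_pt[OF assms(3)]) (use False a in \<open>simp add: ind_def\<close>)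
    then show ?thesis using E(2) False unfolding eq by simp
  qed
qed


lemma EX0:
  assumes "cent a" "i < n"
  shows "integrable (PP n) (\<lambda>xs. a (xs i))"
    and "integral\<^sup>L (PP n) (\<lambda>xs. a (xs i)) = 0"
proof -
  have a: "bddT a" "integral\<^sup>L mu a = 0" using assms unfolding cent_def by auto
  note E = E_gen4[OF assms(2,2,2,2) a(1) bddT_const bddT_const bddT_const, of 1 1 1]
  have eq: "(\<lambda>xs. a (xs i) * 1 * 1 * 1) = (\<lambda>xs. a (xs i))" by simp
  show "integrable (PP n) (\<lambda>xs. a (xs i))" using E(1) unfolding eq .
  have "(\<Prod>t<n. integral\<^sup>L mu (\<lambda>y. ind t i a y * ind t i (\<lambda>_. 1) y * ind t i (\<lambda>_. 1) y * ind t i (\<lambda>_. 1) y)) = 0"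
    by (rule prod_zero_pt[OF assms(2)]) (use a in \<open>simp add: ind_def\<close>)
  then show "integral\<^sup>L (PP n) (\<lambda>xs. a (xs i)) = 0" using E(2) unfolding eq by simp
qed

lemma EX2:
  assumes "cent a" "cent a'" "cent b" "i < i'" "i' < n" "t < n"
  shows "integrable (PP n) (\<lambda>xs. a (xs i) * a' (xs i') * b (xs t))"
    and "integral\<^sup>L (PP n) (\<lambda>xs. a (xs i) * a' (xs i') * b (xs t)) = 0"
proof -
  have a: "bddT a" "integral\<^sup>L mu a = 0" and a': "bddT a'" "integral\<^sup>L mu a' = 0"
    and b: "bddT b" "integral\<^sup>L mu b = 0"
    using assms unfolding cent_def by auto
  have i: "i < n" using assms by simp
  note E = E_gen4[OF i assms(5,6) i a(1) a'(1) b(1) bddT_const, of 1]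
  have eq: "(\<lambda>xs. a (xs i) * a' (xs i') * b (xs t) * 1) = (\<lambda>xs. a (xs i) * a' (xs i') * b (xs t))" by simp
  show "integrable (PP n) (\<lambda>xs. a (xs i) * a' (xs i') * b (xs t))" using E(1) unfolding eq .
  have "(\<Prod>s<n. integral\<^sup>L mu (\<lambda>y. ind s i a y * ind s i' a' y * ind s t b y * ind s i (\<lambda>_. 1) y)) = 0"
  proof (cases "t = i")
    case True
    show ?thesis
      by (rule prod_zero_pt[OF assms(5)]) (use a' True assms(4) in \<open>simp add: ind_def\<close>)
  next
    case False
    show ?thesis
      by (rule prod_zero_pt[OF i]) (use a False assms(4) in \<open>simp add: ind_def\<close>)
  qed
  then show "integral\<^sup>L (PP n) (\<lambda>xs. a (xs i) * a' (xs i') * b (xs t)) = 0" using E(2) unfolding eq by simp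
qed

lemma EX3:
  assumes "cent a" "cent a'" "cent b" "cent b'" "i < i'" "i' < n" "t < t'" "t' < n"
  shows "integrable (PP n) (\<lambda>xs. a (xs i) * a' (xs i') * b (xs t) * b' (xs t'))"
    and "integral\<^sup>L (PP n) (\<lambda>xs. a (xs i) * a' (xs i') * b (xs t) * b' (xs t')) =
      (if i = t \<and> i' = t' then integral\<^sup>L mu (\<lambda>y. a y * b y) * integral\<^sup>L mu (\<lambda>y. a' y * b' y) else 0)"
proof -
  have a: "bddT a" "integral\<^sup>L mu a = 0" and a': "bddT a'" "integral\<^sup>L mu a' = 0"
    and b: "bddT b" "integral\<^sup>L mu b = 0" and b': "bddT b'" "integral\<^sup>L mu b' = 0"
    using assms unfolding cent_def by auto
  have i: "i < n" and t: "t < n" using assms by simp_all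
  note E = E_gen4[OF i assms(6) t assms(8) a(1) a'(1) b(1) b'(1)]
  show "integrable (PP n) (\<lambda>xs. a (xs i) * a' (xs i') * b (xs t) * b' (xs t'))" using E(1) .
  have "(\<Prod>s<n. integral\<^sup>L mu (\<lambda>y. ind s i a y * ind s i' a' y * ind s t b y * ind s t' b' y)) =
      (if i = t \<and> i' = t' then integral\<^sup>L mu (\<lambda>y. a y * b y) * integral\<^sup>L mu (\<lambda>y. a' y * b' y) else 0)"
  proof (cases "i = t \<and> i' = t'")
    case True
    have "(\<Prod>s<n. integral\<^sup>L mu (\<lambda>y. ind s i a y * ind s i' a' y * ind s t b y * ind s t' b' y)) =
        integral\<^sup>L mu (\<lambda>y. ind i i a y * ind i i' a' y * ind i t b y * ind i t' b' y) *
        integral\<^sup>L mu (\<lambda>y. ind i' i a y * ind i' i' a' y * ind i' t b y * ind i' t' b' y)"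
      by (rule prod_two_pt[OF i assms(6)]) (use True assms(5) in \<open>auto simp: ind_def int_one\<close>)
    also have "\<dots> = integral\<^sup>L mu (\<lambda>y. a y * b y) * integral\<^sup>L mu (\<lambda>y. a' y * b' y)"
      using True assms(5) by (simp add: ind_def)
    finally show ?thesis using True by simp
  next
    case False
    consider "i \<noteq> t" "i \<noteq> t'" | "i = t" | "i = t'" by blast
    then have "(\<Prod>s<n. integral\<^sup>L mu (\<lambda>y. ind s i a y * ind s i' a' y * ind s t b y * ind s t' b' y)) = 0"
    proof cases
      case 1
      show ?thesis
        by (rule prod_zero_pt[OF i]) (use a 1 assms(5) in \<open>simp add: ind_def\<close>)
    next
      case 2
      then have "i' \<noteq> t'" using False by blast
      then show ?thesis
        by (intro prod_zero_pt[OF assms(6)]) (use a' 2 assms(5) in \<open>simp add: ind_def\<close>)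
    next
      case 3
      show ?thesis
        by (rule prod_zero_pt[OF t]) (use b 3 assms(5,7) in \<open>simp add: ind_def\<close>)
    qed
    then show ?thesis by (subst if_not_P[OF False])
  qed
  then show "integral\<^sup>L (PP n) (\<lambda>xs. a (xs i) * a' (xs i') * b (xs t) * b' (xs t')) =
      (if i = t \<and> i' = t' then integral\<^sup>L mu (\<lambda>y. a y * b y) * integral\<^sup>L mu (\<lambda>y. a' y * b' y) else 0)"
    using E(2) by simp
qed


definition "JJ j = Sigma {..<j} (\<lambda>l. {..<nwav TYPE('d) l})"
definition "ps p = psi (fst p) (snd p)"
definition "cg p = inner_T (ps p) g"
definition "mm p = integral\<^sup>L mu (ps p)"
definition "u p x = ps p x - mm p"
definition "aa p = mm p - cg p"
definition "w \<delta> p = 2 powr (- 2 * real (fst p)) * real (max (fst p) 1) powr (2 * \<delta>)"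
definition "Cv p q = integral\<^sup>L mu (\<lambda>y. u p y * u q y)"
definition "Sx n p xs = (\<Sum>i<n. u p (xs i))"
definition "Px n p xs = (\<Sum>i'<n. \<Sum>i<i'. u p (xs i) * u p (xs i'))"

lemma finite_JJ[simp]: "finite (JJ j)"
  unfolding JJ_def by simp

lemma JJ_mem: "p \<in> JJ j \<Longrightarrow> snd p < nwav TYPE('d) (fst p)"
  unfolding JJ_def by auto

lemma sum_JJ: "(\<Sum>l<j. \<Sum>k<nwav TYPE('d) l. F l k) = (\<Sum>p\<in>JJ j. F (fst p) (snd p))"
  unfolding JJ_def by (subst sum.Sigma) (auto simp: case_prod_beta)

lemma bddT_ps: "p \<in> JJ j \<Longrightarrow> bddT (ps p)"
  unfolding ps_def using psi_props(1) JJ_mem by blast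

lemma cent_u: "p \<in> JJ j \<Longrightarrow> cent (u p)"
proof -
  assume p: "p \<in> JJ j"
  have b: "bddT (ps p)" by (rule bddT_ps[OF p])
  have "bddT (u p)" unfolding u_def[abs_def] using b by (intro bddT_diff) auto
  moreover have "integral\<^sup>L mu (u p) = 0"
  proof -
    have "integral\<^sup>L mu (u p) = integral\<^sup>L mu (ps p) - integral\<^sup>L mu (\<lambda>_. mm p)"
      unfolding u_def[abs_def] using b bddT_mu_integrable
      by (intro Bochner_Integration.integral_diff) auto
    also have "\<dots> = 0" by (simp add: mm_def)
    finally show ?thesis .
  qed
  ultimately show ?thesis unfolding cent_def by blast
qed

lemma Ustat_decomp:
  "Ustat psi \<delta> n j g xs = 2 / (real n * (real n - 1)) *
     ((\<Sum>p\<in>JJ j. w \<delta> p * (Px n p xs + (real n - 1) * aa p * Sx n p xs)) +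
      (\<Sum>i<n. real i) * (\<Sum>p\<in>JJ j. w \<delta> p * (aa p)\<^sup>2))"
proof -
  have inner: "(\<Sum>l<j. 2 powr (- 2 * real l) * real (max l 1) powr (2 * \<delta>) *
        (\<Sum>k<nwav TYPE('d) l. (psi l k (xs i) - inner_T (psi l k) g) * (psi l k (xs i') - inner_T (psi l k) g)))
      = (\<Sum>p\<in>JJ j. w \<delta> p * ((u p (xs i) + aa p) * (u p (xs i') + aa p)))" for i i'
  proof -
    have "(\<Sum>l<j. 2 powr (- 2 * real l) * real (max l 1) powr (2 * \<delta>) *
        (\<Sum>k<nwav TYPE('d) l. (psi l k (xs i) - inner_T (psi l k) g) * (psi l k (xs i') - inner_T (psi l k) g)))
      = (\<Sum>l<j. \<Sum>k<nwav TYPE('d) l. 2 powr (- 2 * real l) * real (max l 1) powr (2 * \<delta>) *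
        ((psi l k (xs i) - inner_T (psi l k) g) * (psi l k (xs i') - inner_T (psi l k) g)))"
      by (simp add: sum_distrib_left)
    also have "\<dots> = (\<Sum>p\<in>JJ j. w \<delta> p * ((u p (xs i) + aa p) * (u p (xs i') + aa p)))"
      by (subst sum_JJ) (simp add: w_def u_def aa_def cg_def ps_def)
    finally show ?thesis .
  qed
  have per_p: "(\<Sum>i'<n. \<Sum>i<i'. (u p (xs i) + aa p) * (u p (xs i') + aa p))
      = Px n p xs + (real n - 1) * aa p * Sx n p xs + (\<Sum>i<n. real i) * (aa p)\<^sup>2" for p
  proof -
    have "(\<Sum>i'<n. \<Sum>i<i'. (u p (xs i) + aa p) * (u p (xs i') + aa p))
        = (\<Sum>i'<n. \<Sum>i<i'. u p (xs i) * u p (xs i') + aa p * (u p (xs i) + u p (xs i')) + (aa p)\<^sup>2)"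
      by (simp add: algebra_simps power2_eq_square)
    also have "\<dots> = Px n p xs + (\<Sum>i'<n. \<Sum>i<i'. aa p * (u p (xs i) + u p (xs i'))) + (\<Sum>i'<n. \<Sum>i<i'. (aa p)\<^sup>2)"
      by (simp only: sum.distrib Px_def)
    also have "\<dots> = Px n p xs + (real n - 1) * aa p * Sx n p xs + (\<Sum>i<n. real i) * (aa p)\<^sup>2"
    proof -
      have e2: "(\<Sum>i'<n. \<Sum>i<i'. aa p * (u p (xs i) + u p (xs i'))) = aa p * (\<Sum>i'<n. \<Sum>i<i'. (u p (xs i) + u p (xs i')))"
        by (simp only: sum_distrib_left)
      have e3: "(\<Sum>i'<n. \<Sum>i<i'. (aa p)\<^sup>2) = (\<Sum>i<n. real i) * (aa p)\<^sup>2"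
        by (simp add: sum_distrib_right)
      show ?thesis unfolding e2 e3 pair_sum[of "\<lambda>i. u p (xs i)"] Sx_def by simp
    qed
    finally show ?thesis .
  qed
  have "Ustat psi \<delta> n j g xs = 2 / (real n * (real n - 1)) *
      (\<Sum>i'<n. \<Sum>i<i'. \<Sum>p\<in>JJ j. w \<delta> p * ((u p (xs i) + aa p) * (u p (xs i') + aa p)))"
    unfolding Ustat_def inner ..
  also have "(\<Sum>i'<n. \<Sum>i<i'. \<Sum>p\<in>JJ j. w \<delta> p * ((u p (xs i) + aa p) * (u p (xs i') + aa p)))
      = (\<Sum>p\<in>JJ j. w \<delta> p * (\<Sum>i'<n. \<Sum>i<i'. (u p (xs i) + aa p) * (u p (xs i') + aa p)))"
    by (simp add: sum_distrib_left sum.swap[of _ "JJ j"])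
  also have "\<dots> = (\<Sum>p\<in>JJ j. w \<delta> p * (Px n p xs + (real n - 1) * aa p * Sx n p xs) +
       (\<Sum>i<n. real i) * (w \<delta> p * (aa p)\<^sup>2))"
    unfolding per_p by (simp add: algebra_simps)
  also have "\<dots> = (\<Sum>p\<in>JJ j. w \<delta> p * (Px n p xs + (real n - 1) * aa p * Sx n p xs)) +
      (\<Sum>i<n. real i) * (\<Sum>p\<in>JJ j. w \<delta> p * (aa p)\<^sup>2)"
    by (simp add: sum.distrib sum_distrib_left)
  finally show ?thesis .
qed


lemma ES:
  assumes "p \<in> JJ j"
  shows "integrable (PP n) (Sx n p)" "integral\<^sup>L (PP n) (Sx n p) = 0"
proof -
  have c: "cent (u p)" by (rule cent_u[OF assms])
  have "integrable (PP n) (\<lambda>xs. \<Sum>i<n. u p (xs i))"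
    by (rule int_sum1(1)) (use EX0(1)[OF c] in auto)
  then show "integrable (PP n) (Sx n p)" unfolding Sx_def[abs_def] .
  have "integral\<^sup>L (PP n) (\<lambda>xs. \<Sum>i<n. u p (xs i)) = (\<Sum>i<n. integral\<^sup>L (PP n) (\<lambda>xs. u p (xs i)))"
    by (rule int_sum1(2)) (use EX0(1)[OF c] in auto)
  also have "\<dots> = 0" using EX0(2)[OF c] by simp
  finally show "integral\<^sup>L (PP n) (Sx n p) = 0" unfolding Sx_def[abs_def] .
qed

lemma EP:
  assumes "p \<in> JJ j"
  shows "integrable (PP n) (Px n p)" "integral\<^sup>L (PP n) (Px n p) = 0"
proof -
  have c: "cent (u p)" by (rule cent_u[OF assms])
  have I: "integrable (PP n) (\<lambda>xs. u p (xs i) * u p (xs i'))" if "i' \<in> {..<n}" "i \<in> {..<i'}" for i i'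
    using EX1(1)[OF c c, of i n i'] that by simp
  show "integrable (PP n) (Px n p)" unfolding Px_def[abs_def]
    by (rule int_sum2(1)) (rule I)
  have "integral\<^sup>L (PP n) (Px n p) = (\<Sum>i'<n. \<Sum>i<i'. integral\<^sup>L (PP n) (\<lambda>xs. u p (xs i) * u p (xs i')))"
    unfolding Px_def[abs_def] by (rule int_sum2(2)) (rule I)
  also have "\<dots> = 0"
    by (intro sum.neutral ballI) (subst EX1(2)[OF c c], auto)
  finally show "integral\<^sup>L (PP n) (Px n p) = 0" .
qed

lemma ESS:
  assumes "p \<in> JJ j" "q \<in> JJ j"
  shows "integrable (PP n) (\<lambda>xs. Sx n p xs * Sx n q xs)"
    "integral\<^sup>L (PP n) (\<lambda>xs. Sx n p xs * Sx n q xs) = real n * Cv p q"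
proof -
  have c: "cent (u p)" "cent (u q)" by (rule cent_u[OF assms(1)], rule cent_u[OF assms(2)])
  have eq: "(\<lambda>xs. Sx n p xs * Sx n q xs) = (\<lambda>xs. \<Sum>i<n. \<Sum>t<n. u p (xs i) * u q (xs t))"
    by (simp add: Sx_def sum_product)
  have I: "integrable (PP n) (\<lambda>xs. u p (xs i) * u q (xs t))" if "i \<in> {..<n}" "t \<in> {..<n}" for i t
    using EX1(1)[OF c] that by simp
  show "integrable (PP n) (\<lambda>xs. Sx n p xs * Sx n q xs)" unfolding eq
    by (rule int_sum2(1)) (rule I)
  have "integral\<^sup>L (PP n) (\<lambda>xs. Sx n p xs * Sx n q xs) = (\<Sum>i<n. \<Sum>t<n. integral\<^sup>L (PP n) (\<lambda>xs. u p (xs i) * u q (xs t)))"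
    unfolding eq by (rule int_sum2(2)) (rule I)
  also have "\<dots> = (\<Sum>i<n. \<Sum>t<n. if i = t then Cv p q else 0)"
    by (intro sum.cong refl) (simp add: EX1(2)[OF c] Cv_def)
  also have "\<dots> = real n * Cv p q" by simp
  finally show "integral\<^sup>L (PP n) (\<lambda>xs. Sx n p xs * Sx n q xs) = real n * Cv p q" .
qed

lemma EPS:
  assumes "p \<in> JJ j" "q \<in> JJ j"
  shows "integrable (PP n) (\<lambda>xs. Px n p xs * Sx n q xs)"
    "integral\<^sup>L (PP n) (\<lambda>xs. Px n p xs * Sx n q xs) = 0"
proof -
  have c: "cent (u p)" "cent (u q)" by (rule cent_u[OF assms(1)], rule cent_u[OF assms(2)])
  have eq: "(\<lambda>xs. Px n p xs * Sx n q xs) = (\<lambda>xs. \<Sum>i'<n. \<Sum>i<i'. \<Sum>t<n. u p (xs i) * u p (xs i') * u q (xs t))"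
    apply (unfold Px_def Sx_def sum_distrib_right)
    apply (unfold sum_distrib_left mult.assoc[symmetric])
    apply (rule refl)
    done
  have I: "integrable (PP n) (\<lambda>xs. u p (xs i) * u p (xs i') * u q (xs t))"
    if "i' \<in> {..<n}" "i \<in> {..<i'}" "t \<in> {..<n}" for i i' t
    using EX2(1)[OF c(1,1,2)] that by simp
  have I2: "integrable (PP n) (\<lambda>xs. \<Sum>t<n. u p (xs i) * u p (xs i') * u q (xs t))"
    if "i' \<in> {..<n}" "i \<in> {..<i'}" for i i'
    by (rule int_sum1(1)) (rule I[OF that])
  show "integrable (PP n) (\<lambda>xs. Px n p xs * Sx n q xs)" unfolding eq
    by (rule int_sum2(1)) (rule I2)
  have "integral\<^sup>L (PP n) (\<lambda>xs. Px n p xs * Sx n q xs) =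
      (\<Sum>i'<n. \<Sum>i<i'. integral\<^sup>L (PP n) (\<lambda>xs. \<Sum>t<n. u p (xs i) * u p (xs i') * u q (xs t)))"
    unfolding eq by (rule int_sum2(2)) (rule I2)
  also have "\<dots> = (\<Sum>i'<n. \<Sum>i<i'. \<Sum>t<n. integral\<^sup>L (PP n) (\<lambda>xs. u p (xs i) * u p (xs i') * u q (xs t)))"
    by (intro sum.cong refl int_sum1(2) I) auto
  also have "\<dots> = 0"
    by (intro sum.neutral ballI) (subst EX2(2)[OF c(1,1,2)], auto)
  finally show "integral\<^sup>L (PP n) (\<lambda>xs. Px n p xs * Sx n q xs) = 0" .
qed

lemma EPP:
  assumes "p \<in> JJ j" "q \<in> JJ j"
  shows "integrable (PP n) (\<lambda>xs. Px n p xs * Px n q xs)"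
    "integral\<^sup>L (PP n) (\<lambda>xs. Px n p xs * Px n q xs) = (\<Sum>i<n. real i) * (Cv p q)\<^sup>2"
proof -
  have c: "cent (u p)" "cent (u q)" by (rule cent_u[OF assms(1)], rule cent_u[OF assms(2)])
  have eq: "(\<lambda>xs. Px n p xs * Px n q xs) =
     (\<lambda>xs. \<Sum>i'<n. \<Sum>i<i'. \<Sum>t'<n. \<Sum>t<t'. u p (xs i) * u p (xs i') * u q (xs t) * u q (xs t'))"
    apply (unfold Px_def sum_distrib_right)
    apply (unfold sum_distrib_left mult.assoc[symmetric])
    apply (rule refl)
    done
  have I: "integrable (PP n) (\<lambda>xs. u p (xs i) * u p (xs i') * u q (xs t) * u q (xs t'))"
    if "i' \<in> {..<n}" "i \<in> {..<i'}" "t' \<in> {..<n}" "t \<in> {..<t'}" for i i' t t'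
    using EX3(1)[OF c(1,1,2,2)] that by simp
  have I2: "integrable (PP n) (\<lambda>xs. \<Sum>t'<n. \<Sum>t<t'. u p (xs i) * u p (xs i') * u q (xs t) * u q (xs t'))"
    if "i' \<in> {..<n}" "i \<in> {..<i'}" for i i'
    by (rule int_sum2(1)) (rule I[OF that])
  show "integrable (PP n) (\<lambda>xs. Px n p xs * Px n q xs)" unfolding eq
    by (rule int_sum2(1)) (rule I2)
  have "integral\<^sup>L (PP n) (\<lambda>xs. Px n p xs * Px n q xs) =
      (\<Sum>i'<n. \<Sum>i<i'. integral\<^sup>L (PP n) (\<lambda>xs. \<Sum>t'<n. \<Sum>t<t'. u p (xs i) * u p (xs i') * u q (xs t) * u q (xs t')))"
    unfolding eq by (rule int_sum2(2)) (rule I2)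
  also have "\<dots> = (\<Sum>i'<n. \<Sum>i<i'. \<Sum>t'<n. \<Sum>t<t'. integral\<^sup>L (PP n) (\<lambda>xs. u p (xs i) * u p (xs i') * u q (xs t) * u q (xs t')))"
    by (intro sum.cong refl int_sum2(2) I) auto
  also have "\<dots> = (\<Sum>i'<n. \<Sum>i<i'. \<Sum>t'<n. \<Sum>t<t'. if i = t \<and> i' = t' then (Cv p q)\<^sup>2 else 0)"
    by (intro sum.cong refl) (subst EX3(2)[OF c(1,1,2,2)], auto simp: Cv_def power2_eq_square)
  also have "\<dots> = (\<Sum>i'<n. \<Sum>i<i'. (Cv p q)\<^sup>2)"
    by (intro sum.cong refl sum_pair_delta) auto
  also have "\<dots> = (\<Sum>i<n. real i) * (Cv p q)\<^sup>2"
    by (simp add: sum_distrib_right)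
  finally show "integral\<^sup>L (PP n) (\<lambda>xs. Px n p xs * Px n q xs) = (\<Sum>i<n. real i) * (Cv p q)\<^sup>2" .
qed


definition "Tn \<delta> n j xs = (\<Sum>p\<in>JJ j. w \<delta> p * (Px n p xs + (real n - 1) * aa p * Sx n p xs))"

lemma ET:
  shows "integrable (PP n) (Tn \<delta> n j)" "integral\<^sup>L (PP n) (Tn \<delta> n j) = 0"
proof -
  have I: "integrable (PP n) (\<lambda>xs. w \<delta> p * (Px n p xs + (real n - 1) * aa p * Sx n p xs))"
    if "p \<in> JJ j" for p
    using EP(1)[OF that] ES(1)[OF that] by auto
  show "integrable (PP n) (Tn \<delta> n j)" unfolding Tn_def[abs_def]
    by (rule int_sum1(1)) (rule I)
  have "integral\<^sup>L (PP n) (Tn \<delta> n j) = (\<Sum>p\<in>JJ j. integral\<^sup>L (PP n) (\<lambda>xs. w \<delta> p * (Px n p xs + (real n - 1) * aa p * Sx n p xs)))"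
    unfolding Tn_def[abs_def] by (rule int_sum1(2)) (rule I)
  also have "\<dots> = 0"
  proof (intro sum.neutral ballI)
    fix p assume p: "p \<in> JJ j"
    have "integral\<^sup>L (PP n) (\<lambda>xs. Px n p xs + (real n - 1) * aa p * Sx n p xs) =
        integral\<^sup>L (PP n) (Px n p) + integral\<^sup>L (PP n) (\<lambda>xs. (real n - 1) * aa p * Sx n p xs)"
      using EP(1)[OF p] ES(1)[OF p] by (intro Bochner_Integration.integral_add) auto
    also have "\<dots> = 0" using EP(2)[OF p] ES(2)[OF p] by simp
    finally show "integral\<^sup>L (PP n) (\<lambda>xs. w \<delta> p * (Px n p xs + (real n - 1) * aa p * Sx n p xs)) = 0"
      by simp
  qed
  finally show "integral\<^sup>L (PP n) (Tn \<delta> n j) = 0" .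
qed

lemma ETT:
  shows "integrable (PP n) (\<lambda>xs. (Tn \<delta> n j xs)\<^sup>2)"
    "integral\<^sup>L (PP n) (\<lambda>xs. (Tn \<delta> n j xs)\<^sup>2) =
      (\<Sum>p\<in>JJ j. \<Sum>q\<in>JJ j. w \<delta> p * w \<delta> q * ((\<Sum>i<n. real i) * (Cv p q)\<^sup>2 +
          ((real n - 1) * aa p) * ((real n - 1) * aa q) * (real n * Cv p q)))"
proof -
  define b where "b p = (real n - 1) * aa p" for p
  define Z where "Z p q xs = Px n p xs * Px n q xs + b q * (Px n p xs * Sx n q xs) +
      b p * (Px n q xs * Sx n p xs) + b p * b q * (Sx n p xs * Sx n q xs)" for p q xs
  have eq: "(\<lambda>xs. (Tn \<delta> n j xs)\<^sup>2) = (\<lambda>xs. \<Sum>p\<in>JJ j. \<Sum>q\<in>JJ j. w \<delta> p * w \<delta> q * Z p q xs)"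
  proof
    fix xs
    have "(Tn \<delta> n j xs)\<^sup>2 = (\<Sum>p\<in>JJ j. \<Sum>q\<in>JJ j. (w \<delta> p * (Px n p xs + b p * Sx n p xs)) *
        (w \<delta> q * (Px n q xs + b q * Sx n q xs)))"
      unfolding Tn_def power2_eq_square b_def by (rule sum_product)
    also have "\<dots> = (\<Sum>p\<in>JJ j. \<Sum>q\<in>JJ j. w \<delta> p * w \<delta> q * Z p q xs)"
      by (intro sum.cong refl) (simp add: Z_def algebra_simps)
    finally show "(Tn \<delta> n j xs)\<^sup>2 = (\<Sum>p\<in>JJ j. \<Sum>q\<in>JJ j. w \<delta> p * w \<delta> q * Z p q xs)" .
  qed
  have IZ: "integrable (PP n) (Z p q)" and EZ: "integral\<^sup>L (PP n) (Z p q) =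
      (\<Sum>i<n. real i) * (Cv p q)\<^sup>2 + b p * b q * (real n * Cv p q)"
    if p: "p \<in> JJ j" and q: "q \<in> JJ j" for p q
  proof -
    note i1 = EPP(1)[OF p q] and i2 = EPS(1)[OF p q] and i3 = EPS(1)[OF q p] and i4 = ESS(1)[OF p q]
    have i2': "integrable (PP n) (\<lambda>xs. b q * (Px n p xs * Sx n q xs))" using i2 by simp
    have i3': "integrable (PP n) (\<lambda>xs. b p * (Px n q xs * Sx n p xs))" using i3 by simp
    have i4': "integrable (PP n) (\<lambda>xs. b p * b q * (Sx n p xs * Sx n q xs))" using i4 by simp
    show "integrable (PP n) (Z p q)" unfolding Z_def[abs_def]
      using i1 i2' i3' i4' by (intro Bochner_Integration.integrable_add) auto
    have "integral\<^sup>L (PP n) (Z p q) = integral\<^sup>L (PP n) (\<lambda>xs. Px n p xs * Px n q xs) +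
        integral\<^sup>L (PP n) (\<lambda>xs. b q * (Px n p xs * Sx n q xs)) +
        integral\<^sup>L (PP n) (\<lambda>xs. b p * (Px n q xs * Sx n p xs)) +
        integral\<^sup>L (PP n) (\<lambda>xs. b p * b q * (Sx n p xs * Sx n q xs))"
      unfolding Z_def[abs_def] using i1 i2' i3' i4'
      by (simp add: Bochner_Integration.integral_add)
    also have "\<dots> = (\<Sum>i<n. real i) * (Cv p q)\<^sup>2 + b p * b q * (real n * Cv p q)"
      using EPP(2)[OF p q] EPS(2)[OF p q] EPS(2)[OF q p] ESS(2)[OF p q] by simp
    finally show "integral\<^sup>L (PP n) (Z p q) = (\<Sum>i<n. real i) * (Cv p q)\<^sup>2 + b p * b q * (real n * Cv p q)" .
  qed
  have IZ': "integrable (PP n) (\<lambda>xs. w \<delta> p * w \<delta> q * Z p q xs)" if "p \<in> JJ j" "q \<in> JJ j" for p q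
    using IZ[OF that] by simp
  show "integrable (PP n) (\<lambda>xs. (Tn \<delta> n j xs)\<^sup>2)" unfolding eq
    by (rule int_sum2(1)) (rule IZ')
  have "integral\<^sup>L (PP n) (\<lambda>xs. (Tn \<delta> n j xs)\<^sup>2) =
      (\<Sum>p\<in>JJ j. \<Sum>q\<in>JJ j. integral\<^sup>L (PP n) (\<lambda>xs. w \<delta> p * w \<delta> q * Z p q xs))"
    unfolding eq by (rule int_sum2(2)) (rule IZ')
  also have "\<dots> = (\<Sum>p\<in>JJ j. \<Sum>q\<in>JJ j. w \<delta> p * w \<delta> q * ((\<Sum>i<n. real i) * (Cv p q)\<^sup>2 +
          ((real n - 1) * aa p) * ((real n - 1) * aa q) * (real n * Cv p q)))"
    by (intro sum.cong refl) (simp add: EZ b_def)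
  finally show "integral\<^sup>L (PP n) (\<lambda>xs. (Tn \<delta> n j xs)\<^sup>2) =
      (\<Sum>p\<in>JJ j. \<Sum>q\<in>JJ j. w \<delta> p * w \<delta> q * ((\<Sum>i<n. real i) * (Cv p q)\<^sup>2 +
          ((real n - 1) * aa p) * ((real n - 1) * aa q) * (real n * Cv p q)))" .
qed

lemma Var_formula:
  assumes n2: "2 \<le> n"
  shows "(LINT xs|PP n. (Ustat psi \<delta> n j g xs - (LINT ys|PP n. Ustat psi \<delta> n j g ys))\<^sup>2) =
    2 / (real n * (real n - 1)) * (\<Sum>p\<in>JJ j. \<Sum>q\<in>JJ j. w \<delta> p * w \<delta> q * (Cv p q)\<^sup>2) +
    4 / real n * (\<Sum>p\<in>JJ j. \<Sum>q\<in>JJ j. (w \<delta> p * aa p) * (w \<delta> q * aa q) * Cv p q)"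
proof -
  interpret P: prob_space "PP n" by (rule prob_PP)
  define \<kappa> where "\<kappa> = 2 / (real n * (real n - 1))"
  define K0 where "K0 = (\<Sum>i<n. real i) * (\<Sum>p\<in>JJ j. w \<delta> p * (aa p)\<^sup>2)"
  have U: "Ustat psi \<delta> n j g xs = \<kappa> * (Tn \<delta> n j xs + K0)" for xs
    unfolding Ustat_decomp \<kappa>_def K0_def Tn_def ..
  have EU: "(LINT ys|PP n. Ustat psi \<delta> n j g ys) = \<kappa> * K0"
  proof -
    have "(LINT ys|PP n. Ustat psi \<delta> n j g ys) = (LINT ys|PP n. \<kappa> * (Tn \<delta> n j ys + K0))"
      unfolding U ..
    also have "\<dots> = \<kappa> * (LINT ys|PP n. Tn \<delta> n j ys + K0)" by simp
    also have "(LINT ys|PP n. Tn \<delta> n j ys + K0) = (LINT ys|PP n. Tn \<delta> n j ys) + K0"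
      using ET(1) P.prob_space by (subst Bochner_Integration.integral_add) auto
    finally show ?thesis using ET(2) by simp
  qed
  have "(LINT xs|PP n. (Ustat psi \<delta> n j g xs - (LINT ys|PP n. Ustat psi \<delta> n j g ys))\<^sup>2) =
      (LINT xs|PP n. \<kappa>\<^sup>2 * (Tn \<delta> n j xs)\<^sup>2)"
  proof -
    have "(\<lambda>xs. (Ustat psi \<delta> n j g xs - \<kappa> * K0)\<^sup>2) = (\<lambda>xs. \<kappa>\<^sup>2 * (Tn \<delta> n j xs)\<^sup>2)"
    proof
      fix xs show "(Ustat psi \<delta> n j g xs - \<kappa> * K0)\<^sup>2 = \<kappa>\<^sup>2 * (Tn \<delta> n j xs)\<^sup>2"
        unfolding U by (simp add: algebra_simps power2_eq_square)
    qed
    then show ?thesis unfolding EU by simp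
  qed
  also have "\<dots> = \<kappa>\<^sup>2 * (LINT xs|PP n. (Tn \<delta> n j xs)\<^sup>2)" by simp
  also have "\<dots> = \<kappa>\<^sup>2 * (\<Sum>p\<in>JJ j. \<Sum>q\<in>JJ j. w \<delta> p * w \<delta> q * ((\<Sum>i<n. real i) * (Cv p q)\<^sup>2 +
          ((real n - 1) * aa p) * ((real n - 1) * aa q) * (real n * Cv p q)))"
    unfolding ETT(2) ..
  also have "\<dots> = \<kappa>\<^sup>2 * (\<Sum>i<n. real i) * (\<Sum>p\<in>JJ j. \<Sum>q\<in>JJ j. w \<delta> p * w \<delta> q * (Cv p q)\<^sup>2) +
      \<kappa>\<^sup>2 * (real n - 1)\<^sup>2 * real n * (\<Sum>p\<in>JJ j. \<Sum>q\<in>JJ j. (w \<delta> p * aa p) * (w \<delta> q * aa q) * Cv p q)"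
  proof -
    let ?NP = "\<Sum>i<n. real i"
    let ?c = "(real n - 1)\<^sup>2 * real n"
    have "(\<Sum>p\<in>JJ j. \<Sum>q\<in>JJ j. w \<delta> p * w \<delta> q * ((\<Sum>i<n. real i) * (Cv p q)\<^sup>2 +
          ((real n - 1) * aa p) * ((real n - 1) * aa q) * (real n * Cv p q))) =
        (\<Sum>p\<in>JJ j. \<Sum>q\<in>JJ j. ?NP * (w \<delta> p * w \<delta> q * (Cv p q)\<^sup>2) +
           ?c * ((w \<delta> p * aa p) * (w \<delta> q * aa q) * Cv p q))"
      by (intro sum.cong refl) (simp add: algebra_simps power2_eq_square)
    also have "\<dots> = ?NP * (\<Sum>p\<in>JJ j. \<Sum>q\<in>JJ j. w \<delta> p * w \<delta> q * (Cv p q)\<^sup>2) +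
        ?c * (\<Sum>p\<in>JJ j. \<Sum>q\<in>JJ j. (w \<delta> p * aa p) * (w \<delta> q * aa q) * Cv p q)"
      by (simp only: sum.distrib sum_distrib_left)
    finally show ?thesis by (simp only: distrib_left mult.assoc)
  qed
  also have "\<kappa>\<^sup>2 * (\<Sum>i<n. real i) = 2 / (real n * (real n - 1))"
  proof -
    have "real n * (real n - 1) \<noteq> 0" using n2 by simp
    then show ?thesis unfolding \<kappa>_def count_pairs by (rule alg1)
  qed
  also have "\<kappa>\<^sup>2 * (real n - 1)\<^sup>2 * real n = 4 / real n"
  proof -
    have "real n - 1 \<noteq> 0" "real n \<noteq> 0" using n2 by simp_all
    then show ?thesis unfolding \<kappa>_def by (intro alg2)
  qed
  finally show ?thesis .
qed


lemma ps_orth: "p \<in> JJ j \<Longrightarrow> q \<in> JJ j \<Longrightarrow> integral\<^sup>L torus (\<lambda>x. ps p x * ps q x) = (if p = q then 1 else 0)"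
  using psi_orth[OF JJ_mem JJ_mem, of p j q j] unfolding inner_T_def ps_def
  by (auto simp: prod_eq_iff)

lemma quad_orth:
  "integral\<^sup>L torus (\<lambda>x. (\<Sum>p\<in>JJ j. z p * ps p x)\<^sup>2) = (\<Sum>p\<in>JJ j. (z p)\<^sup>2)"
proof -
  have "integral\<^sup>L torus (\<lambda>x. (\<Sum>p\<in>JJ j. z p * ps p x)\<^sup>2) =
      (\<Sum>p\<in>JJ j. \<Sum>q\<in>JJ j. z p * z q * integral\<^sup>L torus (\<lambda>x. ps p x * ps q x))"
    by (rule quad_gen(2)) (intro bddT_integrable bddT_mult bddT_ps; assumption)
  also have "\<dots> = (\<Sum>p\<in>JJ j. \<Sum>q\<in>JJ j. if q = p then z p * z p else 0)"
    by (intro sum.cong refl) (auto simp: ps_orth)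
  also have "\<dots> = (\<Sum>p\<in>JJ j. (z p)\<^sup>2)"
    by (simp add: power2_eq_square)
  finally show ?thesis .
qed

lemma mu_square_le:
  assumes "bddT h"
  shows "integral\<^sup>L mu (\<lambda>x. (h x)\<^sup>2) \<le> L * integral\<^sup>L torus (\<lambda>x. (h x)\<^sup>2)"
proof -
  have h2: "bddT (\<lambda>x. (h x)\<^sup>2)" unfolding power2_eq_square by (intro bddT_mult assms)
  have "integral\<^sup>L mu (\<lambda>x. (h x)\<^sup>2) = integral\<^sup>L torus (\<lambda>x. f x * (h x)\<^sup>2)"
    by (rule bddT_mu_integral[OF h2])
  also have "\<dots> \<le> integral\<^sup>L torus (\<lambda>x. L * (h x)\<^sup>2)"
  proof (rule integral_mono_AE)
    show "integrable torus (\<lambda>x. f x * (h x)\<^sup>2)" using bddT_f h2 by (intro bddT_integrable bddT_mult)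
    show "integrable torus (\<lambda>x. L * (h x)\<^sup>2)" using h2 by (intro bddT_integrable bddT_mult) auto
    show "AE x in torus. f x * (h x)\<^sup>2 \<le> L * (h x)\<^sup>2" using L_bound
    proof eventually_elim
      case (elim x)
      then have "f x \<le> L" by simp
      then show ?case by (intro mult_right_mono) auto
    qed
  qed
  also have "\<dots> = L * integral\<^sup>L torus (\<lambda>x. (h x)\<^sup>2)" by simp
  finally show ?thesis .
qed

lemma B1:
  "(\<Sum>p\<in>JJ j. \<Sum>q\<in>JJ j. (w \<delta> p * aa p) * (w \<delta> q * aa q) * Cv p q) \<le> L * (\<Sum>p\<in>JJ j. (w \<delta> p * aa p)\<^sup>2)"
proof -
  define z where "z p = w \<delta> p * aa p" for p
  define h where "h x = (\<Sum>p\<in>JJ j. z p * ps p x)" for x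
  define c where "c = (\<Sum>p\<in>JJ j. z p * mm p)"
  have bu: "bddT (u p)" if "p \<in> JJ j" for p using cent_u[OF that] unfolding cent_def by blast
  have bh: "bddT h" unfolding h_def[abs_def] using bddT_ps by (intro bddT_sum bddT_mult) auto
  have "(\<Sum>p\<in>JJ j. \<Sum>q\<in>JJ j. (w \<delta> p * aa p) * (w \<delta> q * aa q) * Cv p q) =
      integral\<^sup>L mu (\<lambda>x. (\<Sum>p\<in>JJ j. z p * u p x)\<^sup>2)"
    unfolding Cv_def z_def
    by (rule quad_gen(2)[symmetric]) (intro bddT_mu_integrable bddT_mult bu; assumption)
  also have "(\<lambda>x. (\<Sum>p\<in>JJ j. z p * u p x)\<^sup>2) = (\<lambda>x. (h x)\<^sup>2 - (2 * c * h x - c\<^sup>2))"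
  proof
    fix x
    have e: "(\<Sum>p\<in>JJ j. z p * u p x) = h x - c"
      unfolding h_def c_def u_def by (simp add: algebra_simps sum_subtractf)
    show "(\<Sum>p\<in>JJ j. z p * u p x)\<^sup>2 = (h x)\<^sup>2 - (2 * c * h x - c\<^sup>2)"
      unfolding e by (simp add: power2_eq_square algebra_simps)
  qed
  also have "integral\<^sup>L mu (\<lambda>x. (h x)\<^sup>2 - (2 * c * h x - c\<^sup>2)) =
      integral\<^sup>L mu (\<lambda>x. (h x)\<^sup>2) - (2 * c * integral\<^sup>L mu h - c\<^sup>2)"
  proof -
    have i1: "integrable mu (\<lambda>x. (h x)\<^sup>2)" unfolding power2_eq_square using bh by (intro bddT_mu_integrable bddT_mult)
    have i2: "integrable mu h" using bh by (rule bddT_mu_integrable)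
    have i3: "integrable mu (\<lambda>x. 2 * c * h x - c\<^sup>2)" by (intro bddT_mu_integrable bddT_diff bddT_mult bddT_const bh)
    have "integral\<^sup>L mu (\<lambda>x. (h x)\<^sup>2 - (2 * c * h x - c\<^sup>2)) =
        integral\<^sup>L mu (\<lambda>x. (h x)\<^sup>2) - integral\<^sup>L mu (\<lambda>x. 2 * c * h x - c\<^sup>2)"
      using i1 i3 by (rule Bochner_Integration.integral_diff)
    also have "integral\<^sup>L mu (\<lambda>x. 2 * c * h x - c\<^sup>2) = 2 * c * integral\<^sup>L mu h - c\<^sup>2"
      using i2 bddT_mu_integrable[OF bddT_const[of "c\<^sup>2"]] by (subst Bochner_Integration.integral_diff) auto
    finally show ?thesis .
  qed
  also have "integral\<^sup>L mu h = c"
  proof -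
    have "integral\<^sup>L mu h = (\<Sum>p\<in>JJ j. integral\<^sup>L mu (\<lambda>x. z p * ps p x))"
      unfolding h_def[abs_def] by (rule int_sum1(2)) (use bddT_ps bddT_mu_integrable in auto)
    also have "\<dots> = c" unfolding c_def mm_def by simp
    finally show ?thesis .
  qed
  also have "integral\<^sup>L mu (\<lambda>x. (h x)\<^sup>2) - (2 * c * c - c\<^sup>2) \<le> integral\<^sup>L mu (\<lambda>x. (h x)\<^sup>2)"
    by (simp add: power2_eq_square)
  also have "\<dots> \<le> L * integral\<^sup>L torus (\<lambda>x. (h x)\<^sup>2)" by (rule mu_square_le[OF bh])
  also have "integral\<^sup>L torus (\<lambda>x. (h x)\<^sup>2) = (\<Sum>p\<in>JJ j. (z p)\<^sup>2)"
    unfolding h_def by (rule quad_orth)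
  finally show ?thesis unfolding z_def .
qed


definition "Mm p q = integral\<^sup>L mu (\<lambda>y. ps p y * ps q y)"

lemma Mm_sym: "Mm p q = Mm q p"
  unfolding Mm_def by (simp add: mult.commute)

lemma Cv_eq:
  assumes "p \<in> JJ j" "q \<in> JJ j"
  shows "Cv p q = Mm p q - mm p * mm q"
proof -
  have bp: "bddT (ps p)" and bq: "bddT (ps q)" using bddT_ps assms by auto
  have "(\<lambda>y. u p y * u q y) = (\<lambda>y. ps p y * ps q y - (mm q * ps p y + mm p * ps q y - mm p * mm q))"
    unfolding u_def by (auto simp: algebra_simps)
  then have "Cv p q = integral\<^sup>L mu (\<lambda>y. ps p y * ps q y) - integral\<^sup>L mu (\<lambda>y. mm q * ps p y + mm p * ps q y - mm p * mm q)"
    unfolding Cv_def using bp bq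
    by (simp only:) (intro Bochner_Integration.integral_diff bddT_mu_integrable bddT_mult bddT_add bddT_diff bddT_const)
  also have "integral\<^sup>L mu (\<lambda>y. mm q * ps p y + mm p * ps q y - mm p * mm q) =
      integral\<^sup>L mu (\<lambda>y. mm q * ps p y + mm p * ps q y) - integral\<^sup>L mu (\<lambda>y. mm p * mm q)"
    using bp bq by (intro Bochner_Integration.integral_diff bddT_mu_integrable bddT_mult bddT_add bddT_diff bddT_const)
  also have "integral\<^sup>L mu (\<lambda>y. mm q * ps p y + mm p * ps q y) =
      integral\<^sup>L mu (\<lambda>y. mm q * ps p y) + integral\<^sup>L mu (\<lambda>y. mm p * ps q y)"
    using bp bq by (intro Bochner_Integration.integral_add bddT_mu_integrable bddT_mult bddT_add bddT_diff bddT_const)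
  finally show ?thesis by (simp add: Mm_def mm_def)
qed

lemma bessel:
  assumes p: "p \<in> JJ j"
  shows "(\<Sum>q\<in>JJ j. (Mm p q)\<^sup>2) \<le> L\<^sup>2"
proof -
  define h where "h x = f x * ps p x" for x
  define c where "c q = Mm p q" for q
  define S where "S x = (\<Sum>q\<in>JJ j. c q * ps q x)" for x
  have bp: "bddT (ps p)" by (rule bddT_ps[OF p])
  have bh: "bddT h" unfolding h_def[abs_def] by (intro bddT_mult bddT_f bp)
  have bS: "bddT S" unfolding S_def[abs_def] using bddT_ps by (intro bddT_sum bddT_mult) auto
  have hc: "integral\<^sup>L torus (\<lambda>x. h x * ps q x) = c q" if q: "q \<in> JJ j" for q
  proof -
    have "c q = integral\<^sup>L torus (\<lambda>x. f x * (ps p x * ps q x))"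
      unfolding c_def Mm_def using bp bddT_ps[OF q] by (intro bddT_mu_integral bddT_mult)
    then show ?thesis unfolding h_def by (simp add: mult.assoc)
  qed
  have hS: "integral\<^sup>L torus (\<lambda>x. h x * S x) = (\<Sum>q\<in>JJ j. (c q)\<^sup>2)"
  proof -
    have "integral\<^sup>L torus (\<lambda>x. h x * S x) = integral\<^sup>L torus (\<lambda>x. \<Sum>q\<in>JJ j. c q * (h x * ps q x))"
      unfolding S_def by (simp add: sum_distrib_left algebra_simps)
    also have "\<dots> = (\<Sum>q\<in>JJ j. integral\<^sup>L torus (\<lambda>x. c q * (h x * ps q x)))"
      by (rule int_sum1(2)) (use bh bddT_ps in \<open>auto intro!: bddT_integrable bddT_mult\<close>)
    also have "\<dots> = (\<Sum>q\<in>JJ j. (c q)\<^sup>2)"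
      by (intro sum.cong refl) (simp add: hc power2_eq_square)
    finally show ?thesis .
  qed
  have SS: "integral\<^sup>L torus (\<lambda>x. (S x)\<^sup>2) = (\<Sum>q\<in>JJ j. (c q)\<^sup>2)"
    unfolding S_def by (rule quad_orth)
  have i1: "integrable torus (\<lambda>x. (h x)\<^sup>2)" unfolding power2_eq_square by (intro bddT_integrable bddT_mult bh)
  have i2: "integrable torus (\<lambda>x. 2 * (h x * S x))" by (intro bddT_integrable bddT_mult bh bS bddT_const)
  have i3: "integrable torus (\<lambda>x. (S x)\<^sup>2)" unfolding power2_eq_square by (intro bddT_integrable bddT_mult bS)
  have "0 \<le> integral\<^sup>L torus (\<lambda>x. (h x - S x)\<^sup>2)" by simp
  also have "(\<lambda>x. (h x - S x)\<^sup>2) = (\<lambda>x. (h x)\<^sup>2 - 2 * (h x * S x) + (S x)\<^sup>2)"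
    by (simp add: power2_eq_square algebra_simps)
  also have "integral\<^sup>L torus (\<lambda>x. (h x)\<^sup>2 - 2 * (h x * S x) + (S x)\<^sup>2) =
      integral\<^sup>L torus (\<lambda>x. (h x)\<^sup>2) - integral\<^sup>L torus (\<lambda>x. 2 * (h x * S x)) + integral\<^sup>L torus (\<lambda>x. (S x)\<^sup>2)"
    using i1 i2 i3 by simp
  also have "integral\<^sup>L torus (\<lambda>x. 2 * (h x * S x)) = 2 * (\<Sum>q\<in>JJ j. (c q)\<^sup>2)"
    using hS by simp
  finally have le1: "(\<Sum>q\<in>JJ j. (c q)\<^sup>2) \<le> integral\<^sup>L torus (\<lambda>x. (h x)\<^sup>2)"
    unfolding SS by simp
  have "integral\<^sup>L torus (\<lambda>x. (h x)\<^sup>2) \<le> integral\<^sup>L torus (\<lambda>x. L\<^sup>2 * (ps p x)\<^sup>2)"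
  proof (rule integral_mono_AE)
    show "integrable torus (\<lambda>x. (h x)\<^sup>2)" by (rule i1)
    show "integrable torus (\<lambda>x. L\<^sup>2 * (ps p x)\<^sup>2)" unfolding power2_eq_square
      by (intro bddT_integrable bddT_mult bp bddT_const)
    show "AE x in torus. (h x)\<^sup>2 \<le> L\<^sup>2 * (ps p x)\<^sup>2" using L_bound
    proof eventually_elim
      case (elim x)
      have "(f x)\<^sup>2 \<le> L\<^sup>2"
        using elim by (metis abs_ge_zero power2_abs power_mono)
      then show ?case unfolding h_def power_mult_distrib by (intro mult_right_mono) auto
    qed
  qed
  also have "\<dots> = L\<^sup>2 * integral\<^sup>L torus (\<lambda>x. ps p x * ps p x)" by (simp add: power2_eq_square)
  also have "\<dots> = L\<^sup>2" using ps_orth[OF p p] by simp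
  finally show ?thesis using le1 unfolding c_def by simp
qed

lemma B2:
  "(\<Sum>p\<in>JJ j. \<Sum>q\<in>JJ j. w \<delta> p * w \<delta> q * (Cv p q)\<^sup>2) \<le> L\<^sup>2 * (\<Sum>p\<in>JJ j. (w \<delta> p)\<^sup>2)"
proof -
  define z where "z p = w \<delta> p * mm p" for p
  define Q1 where "Q1 = (\<Sum>p\<in>JJ j. \<Sum>q\<in>JJ j. z p * z q * Mm p q)"
  define Q2 where "Q2 = (\<Sum>p\<in>JJ j. \<Sum>q\<in>JJ j. z p * z q * Cv p q)"
  have bu: "bddT (u p)" if "p \<in> JJ j" for p using cent_u[OF that] unfolding cent_def by blast
  have Q1: "Q1 = integral\<^sup>L mu (\<lambda>x. (\<Sum>p\<in>JJ j. z p * ps p x)\<^sup>2)"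
    unfolding Q1_def Mm_def
    by (rule quad_gen(2)[symmetric]) (intro bddT_mu_integrable bddT_mult bddT_ps; assumption)
  have Q2: "Q2 = integral\<^sup>L mu (\<lambda>x. (\<Sum>p\<in>JJ j. z p * u p x)\<^sup>2)"
    unfolding Q2_def Cv_def
    by (rule quad_gen(2)[symmetric]) (intro bddT_mu_integrable bddT_mult bu; assumption)
  have Q1pos: "0 \<le> Q1" unfolding Q1 by simp
  have Q2pos: "0 \<le> Q2" unfolding Q2 by simp
  have "(\<Sum>p\<in>JJ j. \<Sum>q\<in>JJ j. w \<delta> p * w \<delta> q * (Cv p q)\<^sup>2) + Q1 + Q2 =
      (\<Sum>p\<in>JJ j. \<Sum>q\<in>JJ j. w \<delta> p * w \<delta> q * (Cv p q)\<^sup>2 + z p * z q * Mm p q + z p * z q * Cv p q)"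
    unfolding Q1_def Q2_def by (simp only: sum.distrib)
  also have "\<dots> = (\<Sum>p\<in>JJ j. \<Sum>q\<in>JJ j. w \<delta> p * w \<delta> q * (Mm p q)\<^sup>2)"
    by (intro sum.cong refl) (simp add: Cv_eq z_def power2_eq_square algebra_simps)
  finally have a: "(\<Sum>p\<in>JJ j. \<Sum>q\<in>JJ j. w \<delta> p * w \<delta> q * (Cv p q)\<^sup>2) \<le>
      (\<Sum>p\<in>JJ j. \<Sum>q\<in>JJ j. w \<delta> p * w \<delta> q * (Mm p q)\<^sup>2)"
    using Q1pos Q2pos by linarith
  have "(\<Sum>p\<in>JJ j. \<Sum>q\<in>JJ j. w \<delta> p * w \<delta> q * (Mm p q)\<^sup>2) \<le>
      (\<Sum>p\<in>JJ j. \<Sum>q\<in>JJ j. (w \<delta> p)\<^sup>2 * (Mm p q)\<^sup>2 / 2 + (w \<delta> q)\<^sup>2 * (Mm q p)\<^sup>2 / 2)"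
  proof (intro sum_mono)
    fix p q
    have "0 \<le> (w \<delta> p - w \<delta> q)\<^sup>2 * (Mm p q)\<^sup>2" by simp
    then show "w \<delta> p * w \<delta> q * (Mm p q)\<^sup>2 \<le> (w \<delta> p)\<^sup>2 * (Mm p q)\<^sup>2 / 2 + (w \<delta> q)\<^sup>2 * (Mm q p)\<^sup>2 / 2"
      by (simp add: Mm_sym[of q p] power2_eq_square algebra_simps)
  qed
  also have "\<dots> = (\<Sum>p\<in>JJ j. \<Sum>q\<in>JJ j. (w \<delta> p)\<^sup>2 * (Mm p q)\<^sup>2 / 2) +
      (\<Sum>p\<in>JJ j. \<Sum>q\<in>JJ j. (w \<delta> q)\<^sup>2 * (Mm q p)\<^sup>2 / 2)"
    by (simp only: sum.distrib)
  also have "(\<Sum>p\<in>JJ j. \<Sum>q\<in>JJ j. (w \<delta> q)\<^sup>2 * (Mm q p)\<^sup>2 / 2) = (\<Sum>p\<in>JJ j. \<Sum>q\<in>JJ j. (w \<delta> p)\<^sup>2 * (Mm p q)\<^sup>2 / 2)"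
    by (rule sum.swap)
  also have "(\<Sum>p\<in>JJ j. \<Sum>q\<in>JJ j. (w \<delta> p)\<^sup>2 * (Mm p q)\<^sup>2 / 2) + (\<Sum>p\<in>JJ j. \<Sum>q\<in>JJ j. (w \<delta> p)\<^sup>2 * (Mm p q)\<^sup>2 / 2)
      = (\<Sum>p\<in>JJ j. (w \<delta> p)\<^sup>2 * (\<Sum>q\<in>JJ j. (Mm p q)\<^sup>2))"
    by (simp add: sum_distrib_left sum_divide_distrib[symmetric])
  also have "\<dots> \<le> (\<Sum>p\<in>JJ j. (w \<delta> p)\<^sup>2 * L\<^sup>2)"
    by (intro sum_mono mult_left_mono bessel) auto
  also have "\<dots> = L\<^sup>2 * (\<Sum>p\<in>JJ j. (w \<delta> p)\<^sup>2)" by (simp add: sum_distrib_left mult.commute)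
  finally show ?thesis using a by linarith
qed


lemma A_eq:
  assumes p: "p \<in> JJ j"
  shows "inner_T (\<lambda>x. f x - g x) (ps p) = aa p"
proof -
  have bp: "bddT (ps p)" by (rule bddT_ps[OF p])
  have i1: "integrable torus (\<lambda>x. f x * ps p x)" by (intro bddT_integrable bddT_mult bddT_f bp)
  have i2: "integrable torus (\<lambda>x. ps p x * g x)" by (rule bddT_mult_integrable[OF bp g_int])
  have "inner_T (\<lambda>x. f x - g x) (ps p) = integral\<^sup>L torus (\<lambda>x. f x * ps p x - ps p x * g x)"
    unfolding inner_T_def by (simp add: algebra_simps)
  also have "\<dots> = integral\<^sup>L torus (\<lambda>x. f x * ps p x) - integral\<^sup>L torus (\<lambda>x. ps p x * g x)"
    using i1 i2 by (rule Bochner_Integration.integral_diff)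
  also have "\<dots> = aa p"
    unfolding aa_def mm_def cg_def inner_T_def using bddT_mu_integral[OF bp] by simp
  finally show ?thesis .
qed

lemma Kcoef:
  assumes k: "k < nwav TYPE('d) l"
  shows "inner_T (Kproj psi j (\<lambda>x. f x - g x)) (psi l k) = (if l < j then aa (l, k) else 0)"
proof -
  define A where "A p = inner_T (\<lambda>x. f x - g x) (ps p)" for p
  define C0 where "C0 = inner_T (\<lambda>x. f x - g x) (\<lambda>_. 1)"
  have bq: "bddT (psi l k)" by (rule psi_props(1)[OF k])
  have K: "Kproj psi j (\<lambda>x. f x - g x) = (\<lambda>x. C0 + (\<Sum>p\<in>JJ j. A p * ps p x))"
    unfolding Kproj_def C0_def A_def by (subst sum_JJ) (simp add: ps_def)
  have orth: "integral\<^sup>L torus (\<lambda>x. ps p x * psi l k x) = (if p = (l, k) then 1 else 0)" if "p \<in> JJ j" for p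
    using psi_orth[OF JJ_mem[OF that] k] unfolding inner_T_def ps_def by (auto simp: prod_eq_iff)
  have zero: "integral\<^sup>L torus (psi l k) = 0"
    using psi_props(2)[OF k] unfolding inner_T_def by simp
  have i0: "integrable torus (\<lambda>x. C0 * psi l k x)" by (intro bddT_integrable bddT_mult bddT_const bq)
  have iS: "integrable torus (\<lambda>x. \<Sum>p\<in>JJ j. A p * (ps p x * psi l k x))"
    by (rule int_sum1(1)) (use bddT_ps bq in \<open>auto intro!: bddT_integrable bddT_mult\<close>)
  have "inner_T (Kproj psi j (\<lambda>x. f x - g x)) (psi l k) =
      integral\<^sup>L torus (\<lambda>x. C0 * psi l k x + (\<Sum>p\<in>JJ j. A p * (ps p x * psi l k x)))"
    unfolding K inner_T_def by (simp add: algebra_simps sum_distrib_left sum_distrib_right)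
  also have "\<dots> = integral\<^sup>L torus (\<lambda>x. C0 * psi l k x) + integral\<^sup>L torus (\<lambda>x. \<Sum>p\<in>JJ j. A p * (ps p x * psi l k x))"
    using i0 iS by (rule Bochner_Integration.integral_add)
  also have "integral\<^sup>L torus (\<lambda>x. \<Sum>p\<in>JJ j. A p * (ps p x * psi l k x)) =
      (\<Sum>p\<in>JJ j. integral\<^sup>L torus (\<lambda>x. A p * (ps p x * psi l k x)))"
    by (rule int_sum1(2)) (use bddT_ps bq in \<open>auto intro!: bddT_integrable bddT_mult\<close>)
  also have "\<dots> = (\<Sum>p\<in>JJ j. if p = (l, k) then A p else 0)"
    by (intro sum.cong refl) (simp add: orth)
  also have "\<dots> = (if (l, k) \<in> JJ j then A (l, k) else 0)"
    by (simp add: sum.delta)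
  also have "integral\<^sup>L torus (\<lambda>x. C0 * psi l k x) = 0" using zero by simp
  also have "((l, k) \<in> JJ j) = (l < j)" unfolding JJ_def using k by auto
  finally show ?thesis using A_eq[of "(l, k)" j] unfolding A_def JJ_def using k by auto
qed

lemma B3a:
  "(\<Sum>p\<in>JJ j. w \<delta> p * (aa p)\<^sup>2) \<le> (Hnorm psi \<delta> (Kproj psi j (\<lambda>x. f x - g x)))\<^sup>2"
proof -
  define G where "G = Kproj psi j (\<lambda>x. f x - g x)"
  define t where "t l = 2 powr (- 2 * real l) * real (max l 1) powr (2 * \<delta>) *
                 (\<Sum>k<nwav TYPE('d) l. (inner_T G (psi l k))\<^sup>2)" for l
  have t0: "t l = 0" if "l \<notin> {..<j}" for l
  proof -
    have "inner_T G (psi l k) = 0" if "k < nwav TYPE('d) l" for k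
      using Kcoef[OF that, of j] \<open>l \<notin> {..<j}\<close> unfolding G_def by simp
    then show ?thesis unfolding t_def by simp
  qed
  have "suminf t = (\<Sum>l<j. t l)" by (rule suminf_finite) (auto intro: t0)
  also have "\<dots> = (\<Sum>l<j. \<Sum>k<nwav TYPE('d) l. 2 powr (- 2 * real l) * real (max l 1) powr (2 * \<delta>) * (aa (l, k))\<^sup>2)"
    unfolding t_def G_def by (intro sum.cong refl) (simp add: Kcoef sum_distrib_left)
  also have "\<dots> = (\<Sum>p\<in>JJ j. w \<delta> p * (aa p)\<^sup>2)"
    by (subst sum_JJ) (simp add: w_def)
  finally have X: "suminf t = (\<Sum>p\<in>JJ j. w \<delta> p * (aa p)\<^sup>2)" .
  have Xnn: "0 \<le> suminf t" unfolding X w_def by (intro sum_nonneg) auto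
  have "Hnorm psi \<delta> G = \<bar>inner_T G (\<lambda>_. 1)\<bar> + sqrt (suminf t)"
    unfolding Hnorm_def t_def ..
  then have "sqrt (suminf t) \<le> Hnorm psi \<delta> G" by simp
  then have "(sqrt (suminf t))\<^sup>2 \<le> (Hnorm psi \<delta> G)\<^sup>2" using Xnn by (intro power_mono) auto
  then show ?thesis using Xnn unfolding X[symmetric] G_def by simp
qed


lemma B4:
  "(\<Sum>p\<in>JJ j. (w \<delta> p)\<^sup>2) = (\<Sum>l<j. 2 powr (real l * (real CARD('d) - 4)) * real (max l 1) powr (4 * \<delta>))"
proof -
  have per: "real (nwav TYPE('d) l) * (2 powr (- 2 * real l) * real (max l 1) powr (2 * \<delta>))\<^sup>2 =
      2 powr (real l * (real CARD('d) - 4)) * real (max l 1) powr (4 * \<delta>)" for l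
  proof -
    have a: "real (nwav TYPE('d) l) = 2 powr (real l * real CARD('d))"
      unfolding nwav_def by (simp add: powr_realpow[symmetric])
    have b: "(2 powr (- 2 * real l) :: real)\<^sup>2 = 2 powr (- 4 * real l)"
      by (simp add: power2_eq_square powr_add[symmetric])
    have c: "(real (max l 1) powr (2 * \<delta>))\<^sup>2 = real (max l 1) powr (4 * \<delta>)"
      by (simp add: power2_eq_square powr_add[symmetric])
    have d: "(2::real) powr (real l * real CARD('d)) * 2 powr (- 4 * real l) = 2 powr (real l * (real CARD('d) - 4))"
      by (simp add: powr_add[symmetric] algebra_simps)
    show ?thesis unfolding a power_mult_distrib b c using d by (simp add: mult.assoc)
  qed
  have "(\<Sum>p\<in>JJ j. (w \<delta> p)\<^sup>2) = (\<Sum>l<j. \<Sum>k<nwav TYPE('d) l. (2 powr (- 2 * real l) * real (max l 1) powr (2 * \<delta>))\<^sup>2)"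
    by (subst sum_JJ) (simp add: w_def)
  also have "\<dots> = (\<Sum>l<j. real (nwav TYPE('d) l) * (2 powr (- 2 * real l) * real (max l 1) powr (2 * \<delta>))\<^sup>2)"
    by simp
  also have "\<dots> = (\<Sum>l<j. 2 powr (real l * (real CARD('d) - 4)) * real (max l 1) powr (4 * \<delta>))"
    unfolding per ..
  finally show ?thesis .
qed

lemma S_facts:
  fixes \<delta> :: real
  defines "S \<equiv> (SUP l\<in>{l::int. l \<ge> -1}. 4 powr (- real_of_int l) * real_of_int (max 1 l) powr (2 * \<delta>))"
  shows "\<And>p. w \<delta> p \<le> S" "0 \<le> S"
proof -
  note bdd = S_bdd[of \<delta>]
  show "w \<delta> p \<le> S" for p
  proof -
    have "w \<delta> p = 4 powr (- real_of_int (int (fst p))) * real_of_int (max 1 (int (fst p))) powr (2 * \<delta>)"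
      unfolding w_def four_powr by (simp add: max_def)
    also have "\<dots> \<le> S" unfolding S_def by (rule cSUP_upper[OF _ bdd]) simp
    finally show ?thesis .
  qed
  have "4 powr (- real_of_int (-1::int)) * real_of_int (max 1 (-1::int)) powr (2 * \<delta>) \<le> S"
    unfolding S_def by (rule cSUP_upper[OF _ bdd]) simp
  then show "0 \<le> S" by simp
qed

lemma main_bound:
  "(LINT xs|sample_law f n.
            (Ustat psi \<delta> n j g xs - (LINT ys|sample_law f n. Ustat psi \<delta> n j g ys))\<^sup>2)
         \<le> 4 * Linf_norm f / real n *
             (SUP l\<in>{l::int. l \<ge> -1}. 4 powr (- real_of_int l) * real_of_int (max 1 l) powr (2 * \<delta>)) *
             (Hnorm psi \<delta> (Kproj psi j (\<lambda>x. f x - g x)))\<^sup>2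
           + 2 * (Linf_norm f)\<^sup>2 / (real n * (real n - 1)) *
             (\<Sum>l<j. 2 powr (real l * (real CARD('d) - 4)) * real (max l 1) powr (4 * \<delta>))"
proof -
  define S where "S = (SUP l\<in>{l::int. l \<ge> -1}. 4 powr (- real_of_int l) * real_of_int (max 1 l) powr (2 * \<delta>))"
  define H where "H = (Hnorm psi \<delta> (Kproj psi j (\<lambda>x. f x - g x)))\<^sup>2"
  define B where "B = (\<Sum>l<j. 2 powr (real l * (real CARD('d) - 4)) * real (max l 1) powr (4 * \<delta>))"
  have SL: "sample_law f n = PP n" unfolding sample_law_def PP_def mu_def ..
  have LL: "Linf_norm f = L" unfolding L_def ..
  have S0: "0 \<le> S" and wS: "\<And>p::nat\<times>nat. w \<delta> p \<le> S" unfolding S_def using S_facts by auto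
  have H0: "0 \<le> H" unfolding H_def by simp
  have B0: "0 \<le> B" unfolding B_def by (intro sum_nonneg) auto
  have RHS0: "0 \<le> 4 * L / real n * S * H + 2 * L\<^sup>2 / (real n * (real n - 1)) * B"
  proof -
    have nn: "0 \<le> real n * (real n - 1)" by (cases n) auto
    have a: "0 \<le> 4 * L / real n * S * H" using L_nonneg S0 H0 by (intro mult_nonneg_nonneg divide_nonneg_nonneg) auto
    have "0 \<le> 2 * L\<^sup>2 / (real n * (real n - 1))" by (rule divide_nonneg_nonneg[OF _ nn]) simp
    then have b: "0 \<le> 2 * L\<^sup>2 / (real n * (real n - 1)) * B" using B0 by (rule mult_nonneg_nonneg)
    show ?thesis using a b by (rule add_nonneg_nonneg)
  qed
  show ?thesis
  proof (cases "2 \<le> n")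
    case False
    then have "n = 0 \<or> n = 1" by auto
    then have U0: "Ustat psi \<delta> n j g xs = 0" for xs
      unfolding Ustat_def by auto
    show ?thesis unfolding U0 using RHS0 unfolding S_def H_def B_def LL by simp
  next
    case True
    have X1: "(\<Sum>p\<in>JJ j. \<Sum>q\<in>JJ j. (w \<delta> p * aa p) * (w \<delta> q * aa q) * Cv p q) \<le> L * (S * H)"
    proof -
      have "(\<Sum>p\<in>JJ j. (w \<delta> p * aa p)\<^sup>2) \<le> (\<Sum>p\<in>JJ j. S * (w \<delta> p * (aa p)\<^sup>2))"
      proof (intro sum_mono)
        fix p :: "nat \<times> nat"
        have "0 \<le> w \<delta> p" unfolding w_def by simp
        then have "w \<delta> p * (w \<delta> p * (aa p)\<^sup>2) \<le> S * (w \<delta> p * (aa p)\<^sup>2)"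
          using wS[of p] by (intro mult_right_mono) auto
        moreover have "(w \<delta> p * aa p)\<^sup>2 = w \<delta> p * (w \<delta> p * (aa p)\<^sup>2)" by (simp add: power2_eq_square)
        ultimately show "(w \<delta> p * aa p)\<^sup>2 \<le> S * (w \<delta> p * (aa p)\<^sup>2)" by simp
      qed
      also have "\<dots> = S * (\<Sum>p\<in>JJ j. w \<delta> p * (aa p)\<^sup>2)" by (simp add: sum_distrib_left)
      also have "\<dots> \<le> S * H" unfolding H_def using S0 B3a by (intro mult_left_mono) auto
      finally have "(\<Sum>p\<in>JJ j. (w \<delta> p * aa p)\<^sup>2) \<le> S * H" .
      then have "L * (\<Sum>p\<in>JJ j. (w \<delta> p * aa p)\<^sup>2) \<le> L * (S * H)" using L_nonneg by (rule mult_left_mono)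
      with B1 show ?thesis by (rule order_trans)
    qed
    have X2: "(\<Sum>p\<in>JJ j. \<Sum>q\<in>JJ j. w \<delta> p * w \<delta> q * (Cv p q)\<^sup>2) \<le> L\<^sup>2 * B"
      using B2 unfolding B_def B4 .
    have k0: "0 \<le> 2 / (real n * (real n - 1))" using True by simp
    have "(LINT xs|sample_law f n. (Ustat psi \<delta> n j g xs - (LINT ys|sample_law f n. Ustat psi \<delta> n j g ys))\<^sup>2)
      = 2 / (real n * (real n - 1)) * (\<Sum>p\<in>JJ j. \<Sum>q\<in>JJ j. w \<delta> p * w \<delta> q * (Cv p q)\<^sup>2) +
        4 / real n * (\<Sum>p\<in>JJ j. \<Sum>q\<in>JJ j. (w \<delta> p * aa p) * (w \<delta> q * aa q) * Cv p q)"
      unfolding SL by (rule Var_formula[OF True])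
    also have "\<dots> \<le> 2 / (real n * (real n - 1)) * (L\<^sup>2 * B) + 4 / real n * (L * (S * H))"
      using X1 X2 k0 by (intro add_mono mult_left_mono) auto
    also have "\<dots> = 4 * L / real n * S * H + 2 * L\<^sup>2 / (real n * (real n - 1)) * B"
      by (simp add: field_simps)
    finally show ?thesis unfolding S_def H_def B_def LL .
  qed
qed

end

theorem mainTheorem4:
  fixes f g :: "real ^ 'd \<Rightarrow> real"
    and psi :: "nat \<Rightarrow> nat \<Rightarrow> real ^ 'd \<Rightarrow> real"
    and n j :: nat and \<delta> :: real
  assumes basis: "wavelet_ONB psi"
    and f_meas: "f \<in> borel_measurable torus"
    and f_nonneg: "AE x in torus. 0 \<le> f x"
    and f_dens: "(LINT x|torus. f x) = 1"
    and f_Linf: "esssup torus (\<lambda>x. ereal \<bar>f x\<bar>) < \<infinity>"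
    and g_int: "integrable torus g"
  shows "(LINT xs|sample_law f n.
            (Ustat psi \<delta> n j g xs - (LINT ys|sample_law f n. Ustat psi \<delta> n j g ys))\<^sup>2)
         \<le> 4 * Linf_norm f / real n *
             (SUP l\<in>{l::int. l \<ge> -1}. 4 powr (- real_of_int l) * real_of_int (max 1 l) powr (2 * \<delta>)) *
             (Hnorm psi \<delta> (Kproj psi j (\<lambda>x. f x - g x)))\<^sup>2
           + 2 * (Linf_norm f)\<^sup>2 / (real n * (real n - 1)) *
             (\<Sum>l<j. 2 powr (real l * (real CARD('d) - 4)) * real (max l 1) powr (4 * \<delta>))"
proof -
  interpret Useq f g psi by (rule Useq.intro) (rule assms)+
  show ?thesis by (rule main_bound)
qed

end
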